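(* Let $G$ be a compact Abelian group with unit $e$ and continuous length function $l$; let $(H_n)_{n\in\mathbb{N}}$ be closed subgroups converging to $G$ in the Hausdorff distance of $d_l(g,g')=l(g^{-1}g')$; let $H_\infty=G$, $\lambda_n$ the Haar probability measure on $H_n$, $J_n$ the annihilator of $H_n$ in $\widehat G$, $q_n:\widehat G\to\widehat{H_n}=\widehat G/J_n$; let $\sigma_n$ be skew bicharacters of $\widehat{H_n}$ ($n\in\mathbb{N}\cup\{\infty\}$) whose lifts $\sigma_n'(\chi,\chi')=\sigma_n(q_n\chi,q_n\chi')$ converge pointwise to $\sigma_\infty$; let $\|\cdot\|_n$ be the norm of $C^*(\widehat{H_n},\sigma_n)$. Let $\varepsilon>0$ and let $\varphi_\varepsilon$ be a finite linear combination of characters of $G$ with $\varphi_\varepsilon\ge0$, $\int_G\varphi_\varepsilon d\lambda_\infty=1$ and $\int_G\varphi_\varepsilon l\,d\lambda_\infty\le\varepsilon/(3(1+\varepsilon))$; let $B\subseteq\widehat G$ be the finite set of characters with nonzero coefficient in $\varphi_\varepsilon$, $V_\varepsilon=\{f\in C_c(\widehat G):\operatorname{supp}f\subseteq B,\ f=f^*\text{ in }C^*(\widehat G,\sigma_\infty)\}$, $N_\varepsilon\in\mathbb{N}$ such that for $n\ge N_\varepsilon$, $q_n$ is injective on $B$ and $\int_{H_n}\varphi_\varepsilon d\lambda_n\ge(1+\varepsilon)^{-1}$, and for $n\ge N_\varepsilon$ let $\theta_n(f)(q_n(h))=\sum_{j\in J_n}f(hj)$, with $\theta_\infty=\mathrm{Id}$.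 Then for every $a\in V_\varepsilon$, $\lim_{n\to\infty}\|\theta_n(a)\|_n=\|a\|_\infty$.
   Context: Length function: $l\ge0$, $l(g)=0$ iff $g=e$, symmetric, subadditive. Skew bicharacter: bicharacter $\sigma$ of a discrete Abelian group with $\sigma(\chi,\chi)=1$. $C^*(\Gamma,\sigma)$: twisted group C*-algebra (completion of $C_c(\Gamma)$ with twisted convolution $(f*g)(\chi)=\sum_{\chi'}f(\chi')g(\chi'^{-1}\chi)\sigma(\chi',\chi'^{-1}\chi)$ and involution $f^*(\chi)=\sigma(\chi,\chi^{-1})\overline{f(\chi^{-1})}$). *)

theory Defs
  imports "HOL-Probability.Probability"
begin

definition length_fun :: "('g::{ab_group_add,topological_space} \<Rightarrow> real) \<Rightarrow> bool" where
  "length_fun l \<longleftrightarrow> (\<forall>g. l g \<ge> 0) \<and> (\<forall>g. l g = 0 \<longleftrightarrow> g = 0) \<and> (\<forall>g. l (- g) = l g)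
     \<and> (\<forall>g h. l (g + h) \<le> l g + l h)"

definition hausdorff_dl :: "('g::ab_group_add \<Rightarrow> real) \<Rightarrow> 'g set \<Rightarrow> 'g set \<Rightarrow> real" where
  "hausdorff_dl l A B = max (SUP a\<in>A. INF b\<in>B. l (- a + b)) (SUP b\<in>B. INF a\<in>A. l (- a + b))"

definition is_subgroup :: "'g::ab_group_add set \<Rightarrow> bool" where
  "is_subgroup H \<longleftrightarrow> 0 \<in> H \<and> (\<forall>x\<in>H. \<forall>y\<in>H. x + y \<in> H) \<and> (\<forall>x\<in>H. - x \<in> H)"

definition haar_prob :: "'g::{ab_group_add,topological_space} set \<Rightarrow> 'g measure \<Rightarrow> bool" where
  "haar_prob H M \<longleftrightarrow> prob_space M \<and> space M = H \<and> sets M = sets (restrict_space borel H)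
     \<and> (\<forall>h\<in>H. \<forall>A\<in>sets M. emeasure M ((\<lambda>x. h + x) ` A) = emeasure M A)"

definition dual_group :: "('g::{ab_group_add,topological_space} \<Rightarrow> complex) set" where
  "dual_group = {\<kappa>. continuous_on UNIV \<kappa> \<and> (\<forall>x. cmod (\<kappa> x) = 1)
                    \<and> (\<forall>x y. \<kappa> (x + y) = \<kappa> x * \<kappa> y)}"

definition annihilator :: "'g::{ab_group_add,topological_space} set \<Rightarrow> ('g \<Rightarrow> complex) set" where
  "annihilator H = {\<kappa>\<in>dual_group. \<forall>h\<in>H. \<kappa> h = 1}"

text \<open>Quotient map q_H : dual G \<rightarrow> dual G / J_H, realised as restriction of characters to H.
  With H = UNIV it is the identity.\<close>
definition qmap :: "'g set \<Rightarrow> ('g \<Rightarrow> complex) \<Rightarrow> ('g \<Rightarrow> complex)" where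
  "qmap H \<kappa> = restrict \<kappa> H"

definition qdual :: "'g::{ab_group_add,topological_space} set \<Rightarrow> ('g \<Rightarrow> complex) set" where
  "qdual H = qmap H ` dual_group"

definition chmul :: "'g set \<Rightarrow> ('g \<Rightarrow> complex) \<Rightarrow> ('g \<Rightarrow> complex) \<Rightarrow> ('g \<Rightarrow> complex)" where
  "chmul H \<kappa> \<psi> = restrict (\<lambda>x. \<kappa> x * \<psi> x) H"

definition chinv :: "'g set \<Rightarrow> ('g \<Rightarrow> complex) \<Rightarrow> ('g \<Rightarrow> complex)" where
  "chinv H \<kappa> = restrict (\<lambda>x. cnj (\<kappa> x)) H"

definition skew_bichar :: "'c set \<Rightarrow> ('c \<Rightarrow> 'c \<Rightarrow> 'c) \<Rightarrow> ('c \<Rightarrow> 'c \<Rightarrow> complex) \<Rightarrow> bool" where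
  "skew_bichar \<Gamma> mul \<sigma> \<longleftrightarrow>
     (\<forall>x\<in>\<Gamma>. \<forall>y\<in>\<Gamma>. cmod (\<sigma> x y) = 1)
   \<and> (\<forall>x\<in>\<Gamma>. \<forall>y\<in>\<Gamma>. \<forall>z\<in>\<Gamma>. \<sigma> (mul x y) z = \<sigma> x z * \<sigma> y z)
   \<and> (\<forall>x\<in>\<Gamma>. \<forall>y\<in>\<Gamma>. \<forall>z\<in>\<Gamma>. \<sigma> x (mul y z) = \<sigma> x y * \<sigma> x z)
   \<and> (\<forall>x\<in>\<Gamma>. \<sigma> x x = 1)"

definition twconv :: "'c set \<Rightarrow> ('c \<Rightarrow> 'c \<Rightarrow> 'c) \<Rightarrow> ('c \<Rightarrow> 'c) \<Rightarrow> ('c \<Rightarrow> 'c \<Rightarrow> complex)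
     \<Rightarrow> ('c \<Rightarrow> complex) \<Rightarrow> ('c \<Rightarrow> complex) \<Rightarrow> 'c \<Rightarrow> complex" where
  "twconv \<Gamma> mul iv \<sigma> f g x =
     (if x \<in> \<Gamma> then (\<Sum>y\<in>{y\<in>\<Gamma>. f y \<noteq> 0}. f y * g (mul (iv y) x) * \<sigma> y (mul (iv y) x)) else 0)"

definition fin_supp :: "'c set \<Rightarrow> ('c \<Rightarrow> complex) \<Rightarrow> bool" where
  "fin_supp \<Gamma> f \<longleftrightarrow> finite {x. f x \<noteq> 0} \<and> {x. f x \<noteq> 0} \<subseteq> \<Gamma>"

definition l2norm :: "('c \<Rightarrow> complex) \<Rightarrow> real" where
  "l2norm \<xi> = sqrt (\<Sum>x\<in>{x. \<xi> x \<noteq> 0}. (cmod (\<xi> x))\<^sup>2)"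

text \<open>Norm of C*(\<Gamma>,\<sigma>) on C_c(\<Gamma>): operator norm of the twisted left regular
  representation on l^2(\<Gamma>) (computed on the dense subspace of finitely supported vectors).
  For abelian (amenable) \<Gamma> this is the (full = reduced) C*-norm.\<close>
definition twisted_cstar_norm :: "'c set \<Rightarrow> ('c \<Rightarrow> 'c \<Rightarrow> 'c) \<Rightarrow> ('c \<Rightarrow> 'c) \<Rightarrow> ('c \<Rightarrow> 'c \<Rightarrow> complex)
     \<Rightarrow> ('c \<Rightarrow> complex) \<Rightarrow> real" where
  "twisted_cstar_norm \<Gamma> mul iv \<sigma> f =
     (SUP \<xi>\<in>{\<xi>. fin_supp \<Gamma> \<xi> \<and> l2norm \<xi> \<le> 1}. l2norm (twconv \<Gamma> mul iv \<sigma> f \<xi>))"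

definition twstar :: "('c \<Rightarrow> 'c) \<Rightarrow> ('c \<Rightarrow> 'c \<Rightarrow> complex) \<Rightarrow> ('c \<Rightarrow> complex) \<Rightarrow> 'c \<Rightarrow> complex" where
  "twstar iv \<sigma> f x = \<sigma> x (iv x) * cnj (f (iv x))"

text \<open>\<theta>_H(f)(q_H(h)) = sum over j in J_H of f(hj), i.e. the sum of f over the fibre of q_H.\<close>
definition theta :: "'g::{ab_group_add,topological_space} set \<Rightarrow> (('g \<Rightarrow> complex) \<Rightarrow> complex)
     \<Rightarrow> ('g \<Rightarrow> complex) \<Rightarrow> complex" where
  "theta H f \<psi> = (if \<psi> \<in> qdual H
      then (\<Sum>\<kappa>\<in>{\<kappa>\<in>dual_group. qmap H \<kappa> = \<psi> \<and> f \<kappa> \<noteq> 0}. f \<kappa>) else 0)"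

end

theory Submission
  imports Defs "HOL-Real_Asymp.Real_Asymp"
begin

definition spt :: "('c \<Rightarrow> 'a::zero) \<Rightarrow> 'c set" where "spt f = {x. f x \<noteq> 0}"

definition gsum :: "'c set \<Rightarrow> ('c \<Rightarrow> 'a::comm_monoid_add) \<Rightarrow> 'a" where
  "gsum G F = sum F {x\<in>G. F x \<noteq> 0}"

lemma gsum_eq:
  assumes "finite A" "A \<subseteq> G" "\<And>x. x \<in> G \<Longrightarrow> x \<notin> A \<Longrightarrow> F x = 0"
  shows "gsum G F = sum F A"
proof -
  have "{x\<in>G. F x \<noteq> 0} \<subseteq> A" using assms by auto
  then show ?thesis unfolding gsum_def
    by (intro sum.mono_neutral_left) (use assms in auto)
qed

lemma gsum_cong: "(\<And>x. x\<in>G \<Longrightarrow> F x = F' x) \<Longrightarrow> gsum G F = gsum G F'"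
proof -
  assume h: "\<And>x. x\<in>G \<Longrightarrow> F x = F' x"
  have "{x\<in>G. F x \<noteq> 0} = {x\<in>G. F' x \<noteq> 0}" using h by auto
  then show ?thesis unfolding gsum_def using h by (intro sum.cong) auto
qed

lemma gsum_reindex:
  assumes "bij_betw h G G"
  shows "gsum G (\<lambda>x. F (h x)) = gsum G F"
proof -
  have "bij_betw h {x\<in>G. F (h x) \<noteq> 0} {u\<in>G. F u \<noteq> 0}"
    using assms unfolding bij_betw_def inj_on_def by auto
  then show ?thesis unfolding gsum_def by (rule sum.reindex_bij_betw)
qed

lemma l2_sum:
  assumes "finite A" "spt u \<subseteq> A"
  shows "l2norm u = sqrt (\<Sum>x\<in>A. (cmod (u x))\<^sup>2)"
proof -
  have "(\<Sum>x\<in>{x. u x \<noteq> 0}. (cmod (u x))\<^sup>2) = (\<Sum>x\<in>A. (cmod (u x))\<^sup>2)"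
    using assms by (intro sum.mono_neutral_left) (auto simp: spt_def)
  then show ?thesis unfolding l2norm_def by simp
qed

lemma l2_L2: "finite A \<Longrightarrow> spt u \<subseteq> A \<Longrightarrow> l2norm u = L2_set (\<lambda>x. cmod (u x)) A"
  using l2_sum[of A u] by (simp add: L2_set_def)

lemma l2_nonneg: "l2norm u \<ge> 0"
  unfolding l2norm_def by (simp add: sum_nonneg)

lemma unimod_cnj: "cmod z = 1 \<Longrightarrow> z * cnj z = 1"
  using complex_norm_square[of z] by simp

locale twg =
  fixes G :: "'c set" and mul :: "'c \<Rightarrow> 'c \<Rightarrow> 'c" and iv :: "'c \<Rightarrow> 'c" and e :: 'c
    and \<sigma> :: "'c \<Rightarrow> 'c \<Rightarrow> complex"
  assumes e_in[simp]: "e \<in> G"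
    and mul_in[simp]: "x \<in> G \<Longrightarrow> y \<in> G \<Longrightarrow> mul x y \<in> G"
    and iv_in[simp]: "x \<in> G \<Longrightarrow> iv x \<in> G"
    and assoc: "x\<in>G \<Longrightarrow> y\<in>G \<Longrightarrow> z\<in>G \<Longrightarrow> mul (mul x y) z = mul x (mul y z)"
    and comm: "x\<in>G \<Longrightarrow> y\<in>G \<Longrightarrow> mul x y = mul y x"
    and unit_l[simp]: "x\<in>G \<Longrightarrow> mul e x = x"
    and inv_l[simp]: "x\<in>G \<Longrightarrow> mul (iv x) x = e"
    and skew: "skew_bichar G mul \<sigma>"
begin

lemma unit_r[simp]: "x\<in>G \<Longrightarrow> mul x e = x" using comm[of x e] by simp
lemma inv_r[simp]: "x\<in>G \<Longrightarrow> mul x (iv x) = e" using comm[of x "iv x"] by simp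
lemma cancel1[simp]: "x\<in>G \<Longrightarrow> y\<in>G \<Longrightarrow> mul y (mul (iv y) x) = x"
  using assoc[of y "iv y" x] by simp
lemma cancel2[simp]: "x\<in>G \<Longrightarrow> y\<in>G \<Longrightarrow> mul (iv y) (mul y x) = x"
  using assoc[of "iv y" y x] by simp
lemma iv_unique: "u\<in>G \<Longrightarrow> v\<in>G \<Longrightarrow> mul u v = e \<Longrightarrow> u = iv v"
proof -
  assume uv: "u\<in>G" "v\<in>G" "mul u v = e"
  have "u = mul u (mul v (iv v))" using uv by simp
  also have "\<dots> = mul (mul u v) (iv v)" by (rule assoc[symmetric]) (use uv in auto)
  also have "\<dots> = iv v" using uv by simp
  finally show ?thesis .
qed
lemma iv_iv[simp]: "x\<in>G \<Longrightarrow> iv (iv x) = x"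
  using iv_unique[of x "iv x"] by simp
lemma iv_mul: "x\<in>G \<Longrightarrow> y\<in>G \<Longrightarrow> iv (mul x y) = mul (iv x) (iv y)"
proof -
  assume xy: "x\<in>G" "y\<in>G"
  have "mul (mul (iv x) (iv y)) (mul x y) = mul (iv x) (mul (iv y) (mul x y))"
    using xy by (simp add: assoc)
  also have "\<dots> = mul (iv x) (mul (iv y) (mul y x))" using xy by (simp add: comm[of x y])
  also have "\<dots> = e" using xy by simp
  finally have "mul (mul (iv x) (iv y)) (mul x y) = e" .
  then show ?thesis using xy by (metis iv_in iv_unique mul_in)
qed
lemma iv_e[simp]: "iv e = e" using iv_unique[of e e] by simp
lemma mul_cancel_left:
  assumes "y\<in>G" "x\<in>G" "x'\<in>G" "mul y x = mul y x'" shows "x = x'"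
proof -
  have "x = mul (iv y) (mul y x)" using assms(1,2) by simp
  also have "\<dots> = mul (iv y) (mul y x')" by (simp only: assms(4))
  also have "\<dots> = x'" using assms(1,3) by simp
  finally show ?thesis .
qed

lemma bij_mul: "y \<in> G \<Longrightarrow> bij_betw (mul y) G G"
  by (rule bij_betw_byWitness[where f'="mul (iv y)"]) auto
lemma bij_iv: "bij_betw iv G G"
  by (rule bij_betw_byWitness[where f'="iv"]) auto

lemma gsum_shift: "y \<in> G \<Longrightarrow> gsum G (\<lambda>x. F (mul y x)) = gsum G F"
  using gsum_reindex[OF bij_mul] by blast
lemma gsum_iv: "gsum G (\<lambda>x. F (iv x)) = gsum G F"
  using gsum_reindex[OF bij_iv] by blast

lemma \<sigma>_mod: "x\<in>G \<Longrightarrow> y\<in>G \<Longrightarrow> cmod (\<sigma> x y) = 1"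
  using skew unfolding skew_bichar_def by blast
lemma \<sigma>_l: "x\<in>G \<Longrightarrow> y\<in>G \<Longrightarrow> z\<in>G \<Longrightarrow> \<sigma> (mul x y) z = \<sigma> x z * \<sigma> y z"
  using skew unfolding skew_bichar_def by blast
lemma \<sigma>_r: "x\<in>G \<Longrightarrow> y\<in>G \<Longrightarrow> z\<in>G \<Longrightarrow> \<sigma> x (mul y z) = \<sigma> x y * \<sigma> x z"
  using skew unfolding skew_bichar_def by blast
lemma \<sigma>_diag[simp]: "x\<in>G \<Longrightarrow> \<sigma> x x = 1"
  using skew unfolding skew_bichar_def by blast
lemma \<sigma>_ne0: "x\<in>G \<Longrightarrow> y\<in>G \<Longrightarrow> \<sigma> x y \<noteq> 0"
  using \<sigma>_mod by force
lemma \<sigma>_e_r[simp]: "x\<in>G \<Longrightarrow> \<sigma> x e = 1"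
proof -
  assume x: "x\<in>G"
  have "\<sigma> x e = \<sigma> x e * \<sigma> x e" using \<sigma>_r[OF x e_in e_in] by simp
  then have "\<sigma> x e * 1 = \<sigma> x e * \<sigma> x e" by simp
  then show ?thesis using \<sigma>_ne0[OF x e_in] by (simp only: mult_cancel_left) simp
qed
lemma \<sigma>_e_l[simp]: "x\<in>G \<Longrightarrow> \<sigma> e x = 1"
proof -
  assume x: "x\<in>G"
  have "\<sigma> e x = \<sigma> e x * \<sigma> e x" using \<sigma>_l[OF e_in e_in x] by simp
  then have "\<sigma> e x * 1 = \<sigma> e x * \<sigma> e x" by simp
  then show ?thesis using \<sigma>_ne0[OF e_in x] by (simp only: mult_cancel_left) simp
qed
lemma \<sigma>_iv_r: "x\<in>G \<Longrightarrow> y\<in>G \<Longrightarrow> \<sigma> x (iv y) = cnj (\<sigma> x y)"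
proof -
  assume xy: "x\<in>G" "y\<in>G"
  have "\<sigma> x y * \<sigma> x (iv y) = 1" using \<sigma>_r[of x y "iv y"] xy by simp
  moreover have "\<sigma> x y * cnj (\<sigma> x y) = 1" using unimod_cnj \<sigma>_mod xy by blast
  ultimately show ?thesis using \<sigma>_ne0 xy by (metis mult_cancel_left)
qed
lemma \<sigma>_iv_l: "x\<in>G \<Longrightarrow> y\<in>G \<Longrightarrow> \<sigma> (iv x) y = cnj (\<sigma> x y)"
proof -
  assume xy: "x\<in>G" "y\<in>G"
  have "\<sigma> x y * \<sigma> (iv x) y = 1" using \<sigma>_l[of x "iv x" y] xy by simp
  moreover have "\<sigma> x y * cnj (\<sigma> x y) = 1" using unimod_cnj \<sigma>_mod xy by blast
  ultimately show ?thesis using \<sigma>_ne0 xy by (metis mult_cancel_left)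
qed
lemma \<sigma>_skew: "x\<in>G \<Longrightarrow> y\<in>G \<Longrightarrow> \<sigma> x y = cnj (\<sigma> y x)"
proof -
  assume xy: "x\<in>G" "y\<in>G"
  have "\<sigma> (mul x y) (mul x y) = \<sigma> x x * \<sigma> x y * (\<sigma> y x * \<sigma> y y)"
    using xy by (simp add: \<sigma>_l \<sigma>_r del: \<sigma>_diag)
  then have "\<sigma> x y * \<sigma> y x = 1" using xy by simp
  then have "\<sigma> y x * \<sigma> x y = 1" by (simp add: mult.commute)
  moreover have "\<sigma> y x * cnj (\<sigma> y x) = 1" using unimod_cnj \<sigma>_mod xy by blast
  ultimately show ?thesis using \<sigma>_ne0 xy by (metis mult_cancel_left)
qed
lemma \<sigma>_shift[simp]: "x\<in>G \<Longrightarrow> y\<in>G \<Longrightarrow> \<sigma> y (mul (iv y) x) = \<sigma> y x"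
proof -
  assume xy: "x\<in>G" "y\<in>G"
  have "\<sigma> y (iv y) = 1" using \<sigma>_iv_r[of y y] xy by simp
  then show ?thesis using xy by (simp add: \<sigma>_r)
qed
lemma \<sigma>_shift2[simp]: "u\<in>G \<Longrightarrow> y\<in>G \<Longrightarrow> \<sigma> y (mul y u) = \<sigma> y u"
  by (simp add: \<sigma>_r)

end

definition l1 :: "('c \<Rightarrow> complex) \<Rightarrow> real" where "l1 f = (\<Sum>x\<in>spt f. cmod (f x))"

lemma L2_set_sum_le:
  "L2_set (\<lambda>x. \<Sum>k\<in>K. F k x) A \<le> (\<Sum>k\<in>K. L2_set (F k) A)"
proof (induction K rule: infinite_finite_induct)
  case (infinite K) then show ?case by (simp add: L2_set_def)
next
  case empty then show ?case by (simp add: L2_set_def)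
next
  case (insert k K)
  have eq: "(\<lambda>x. \<Sum>k\<in>insert k K. F k x) = (\<lambda>x. F k x + (\<Sum>k\<in>K. F k x))"
    using insert(1,2) by (simp add: sum.insert)
  have "L2_set (\<lambda>x. \<Sum>k\<in>insert k K. F k x) A \<le> L2_set (F k) A + L2_set (\<lambda>x. \<Sum>k\<in>K. F k x) A"
    unfolding eq by (rule L2_set_triangle_ineq)
  also have "\<dots> \<le> L2_set (F k) A + (\<Sum>k\<in>K. L2_set (F k) A)" using insert.IH by (rule add_left_mono)
  also have "\<dots> = (\<Sum>k\<in>insert k K. L2_set (F k) A)" using insert(1,2) by (simp add: sum.insert)
  finally show ?case .
qed

lemma l2_zero: "l2norm (\<lambda>x. 0) = 0" by (simp add: l2norm_def)

lemma l2_scale: "finite (spt u) \<Longrightarrow> l2norm (\<lambda>x. c * u x) = cmod c * l2norm u"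
proof -
  assume fin: "finite (spt u)"
  have "l2norm (\<lambda>x. c * u x) = sqrt (\<Sum>x\<in>spt u. (cmod (c * u x))\<^sup>2)"
    by (rule l2_sum) (use fin in \<open>auto simp: spt_def\<close>)
  also have "\<dots> = sqrt ((cmod c)\<^sup>2 * (\<Sum>x\<in>spt u. (cmod (u x))\<^sup>2))"
    by (simp add: norm_mult power_mult_distrib sum_distrib_left)
  also have "\<dots> = cmod c * sqrt (\<Sum>x\<in>spt u. (cmod (u x))\<^sup>2)"
    by (simp add: real_sqrt_mult)
  also have "\<dots> = cmod c * l2norm u" using l2_sum[of "spt u" u] fin by simp
  finally show ?thesis .
qed

lemma l2_eq0: "finite (spt u) \<Longrightarrow> l2norm u = 0 \<Longrightarrow> u = (\<lambda>x. 0)"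
proof -
  assume fin: "finite (spt u)" and z: "l2norm u = 0"
  have "(\<Sum>x\<in>spt u. (cmod (u x))\<^sup>2) = 0" using z l2_sum[of "spt u" u] fin by simp
  then have "\<forall>x\<in>spt u. (cmod (u x))\<^sup>2 = 0" using fin by (subst (asm) sum_nonneg_eq_0_iff) auto
  then show ?thesis by (auto simp: spt_def)
qed

context twg begin

abbreviation conv where "conv \<equiv> twconv G mul iv \<sigma>"
abbreviation fs where "fs \<equiv> fin_supp G"
abbreviation pset :: "'c set \<Rightarrow> 'c set \<Rightarrow> 'c set" where
  "pset A B \<equiv> (\<lambda>p. mul (fst p) (snd p)) ` (A \<times> B)"
abbreviation nrm where "nrm \<equiv> twisted_cstar_norm G mul iv \<sigma>"

definition ip :: "('c \<Rightarrow> complex) \<Rightarrow> ('c \<Rightarrow> complex) \<Rightarrow> complex" where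
  "ip u v = gsum G (\<lambda>x. u x * cnj (v x))"

lemma fsD: "fs f \<Longrightarrow> finite (spt f) \<and> spt f \<subseteq> G"
  by (simp add: fin_supp_def spt_def)
lemma fsI: "finite (spt f) \<Longrightarrow> spt f \<subseteq> G \<Longrightarrow> fs f"
  by (simp add: fin_supp_def spt_def)
lemma fs_out: "fs f \<Longrightarrow> x \<notin> G \<Longrightarrow> f x = 0"
  using fsD by (auto simp: spt_def)

lemma pset_fin: "finite A \<Longrightarrow> finite B \<Longrightarrow> finite (pset A B)" by simp
lemma pset_sub:
  assumes "A \<subseteq> G" "B \<subseteq> G" shows "pset A B \<subseteq> G"
proof
  fix x assume "x \<in> pset A B"
  then obtain y z where yz: "y\<in>A" "z\<in>B" "x = mul y z" by auto
  then have "y \<in> G" "z \<in> G" using assms by auto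
  then show "x \<in> G" using yz by simp
qed
lemma pset_mem: "y \<in> A \<Longrightarrow> z \<in> B \<Longrightarrow> mul y z \<in> pset A B"
  by (rule image_eqI[where x="(y,z)"]) auto

lemma swap3: "a\<in>G \<Longrightarrow> b\<in>G \<Longrightarrow> c\<in>G \<Longrightarrow> mul a (mul b c) = mul b (mul a c)"
proof -
  assume abc: "a\<in>G" "b\<in>G" "c\<in>G"
  have "mul a (mul b c) = mul (mul a b) c" using abc by (simp add: assoc)
  also have "\<dots> = mul (mul b a) c" using abc by (simp add: comm[of a b])
  also have "\<dots> = mul b (mul a c)" using abc by (simp add: assoc)
  finally show ?thesis .
qed

lemma conv_out: "x \<notin> G \<Longrightarrow> conv f g x = 0"
  by (simp add: twconv_def)

lemma conv_sum:
  assumes "finite A" "A \<subseteq> G" "spt f \<subseteq> A" "x \<in> G"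
  shows "conv f g x = (\<Sum>y\<in>A. f y * g (mul (iv y) x) * \<sigma> y x)"
proof -
  have "conv f g x = (\<Sum>y\<in>{y\<in>G. f y \<noteq> 0}. f y * g (mul (iv y) x) * \<sigma> y x)"
    unfolding twconv_def using assms(4) by (simp add: \<sigma>_shift)
  also have "\<dots> = (\<Sum>y\<in>A. f y * g (mul (iv y) x) * \<sigma> y x)"
    using assms by (intro sum.mono_neutral_left) (auto simp: spt_def)
  finally show ?thesis .
qed

lemma conv_spt:
  assumes "fs f"
  shows "spt (conv f g) \<subseteq> pset (spt f) (spt g)"
proof
  fix x assume "x \<in> spt (conv f g)"
  then have nz: "conv f g x \<noteq> 0" by (simp add: spt_def)
  then have xG: "x \<in> G" using conv_out by blast
  have "conv f g x = (\<Sum>y\<in>spt f. f y * g (mul (iv y) x) * \<sigma> y x)"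
    using assms fsD xG by (intro conv_sum) auto
  with nz have s: "(\<Sum>y\<in>spt f. f y * g (mul (iv y) x) * \<sigma> y x) \<noteq> 0" by simp
  obtain y where y: "y \<in> spt f" "f y * g (mul (iv y) x) * \<sigma> y x \<noteq> 0"
    using sum.not_neutral_contains_not_neutral[OF s] by blast
  then have "mul (iv y) x \<in> spt g" by (simp add: spt_def)
  then have "mul y (mul (iv y) x) \<in> pset (spt f) (spt g)" by (rule pset_mem[OF y(1)])
  moreover have "y \<in> G" using y assms fsD by auto
  ultimately show "x \<in> pset (spt f) (spt g)" using xG by simp
qed

lemma fs_conv: "fs f \<Longrightarrow> fs g \<Longrightarrow> fs (conv f g)"
proof -
  assume f: "fs f" and g: "fs g"
  have "finite (pset (spt f) (spt g))" using f g fsD by simp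
  moreover have "pset (spt f) (spt g) \<subseteq> G" using f g fsD by (intro pset_sub) auto
  ultimately show ?thesis using conv_spt[OF f, of g] by (intro fsI) (rule finite_subset, assumption+, rule subset_trans)
qed

lemma conv_scale: "fs f \<Longrightarrow> conv f (\<lambda>x. c * g x) = (\<lambda>x. c * conv f g x)"
proof
  fix x assume f: "fs f"
  show "conv f (\<lambda>x. c * g x) x = c * conv f g x"
  proof (cases "x \<in> G")
    case True
    then show ?thesis using f fsD
      by (simp add: conv_sum[of "spt f"] sum_distrib_left mult_ac)
  next
    case False then show ?thesis by (simp add: conv_out)
  qed
qed

lemma conv_delta:
  assumes "fs g" shows "conv (\<lambda>x. if x = e then 1 else 0) g = g"
proof
  fix x
  show "conv (\<lambda>x. if x = e then 1 else 0) g x = g x"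
  proof (cases "x \<in> G")
    case True
    then have "conv (\<lambda>x. if x = e then 1 else 0) g x
      = (\<Sum>y\<in>{e}. (if y = e then 1 else 0) * g (mul (iv y) x) * \<sigma> y x)"
      by (intro conv_sum) (auto simp: spt_def)
    then show ?thesis using True by simp
  next
    case False then show ?thesis using assms by (simp add: conv_out fs_out)
  qed
qed

lemma fs_delta: "fs (\<lambda>x. if x = e then 1 else 0)"
  by (rule fsI) (auto simp: spt_def)

lemma conv_assoc:
  assumes f: "fs f" and g: "fs g" and h: "fs h"
  shows "conv f (conv g h) = conv (conv f g) h"
proof
  fix x
  show "conv f (conv g h) x = conv (conv f g) h x"
  proof (cases "x \<in> G")
    case False then show ?thesis by (simp add: conv_out)
  next
    case x: True
    define Sf where "Sf = spt f"
    define Sg where "Sg = spt g"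
    define W where "W = pset Sf Sg"
    have Sf: "finite Sf" "Sf \<subseteq> G" using f fsD Sf_def by auto
    have Sg: "finite Sg" "Sg \<subseteq> G" using g fsD Sg_def by auto
    have W: "finite W" "W \<subseteq> G" using Sf Sg W_def pset_sub by auto
    have "conv f (conv g h) x = (\<Sum>y\<in>Sf. f y * conv g h (mul (iv y) x) * \<sigma> y x)"
      using Sf x Sf_def by (intro conv_sum) auto
    also have "\<dots> = (\<Sum>y\<in>Sf. \<Sum>z\<in>Sg. f y * g z * h (mul (iv z) (mul (iv y) x))
                        * \<sigma> z (mul (iv y) x) * \<sigma> y x)"
    proof (rule sum.cong[OF refl])
      fix y assume y: "y \<in> Sf"
      have "conv g h (mul (iv y) x) = (\<Sum>z\<in>Sg. g z * h (mul (iv z) (mul (iv y) x)) * \<sigma> z (mul (iv y) x))"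
        using Sg y Sf x Sg_def by (intro conv_sum) auto
      then show "f y * conv g h (mul (iv y) x) * \<sigma> y x = (\<Sum>z\<in>Sg. f y * g z * h (mul (iv z) (mul (iv y) x))
                        * \<sigma> z (mul (iv y) x) * \<sigma> y x)"
        by (simp add: sum_distrib_left sum_distrib_right mult_ac)
    qed
    also have "\<dots> = (\<Sum>y\<in>Sf. \<Sum>z\<in>Sg. f y * g z * \<sigma> y (mul y z) * h (mul (iv (mul y z)) x) * \<sigma> (mul y z) x)"
    proof (intro sum.cong refl)
      fix y z assume y: "y \<in> Sf" and z: "z \<in> Sg"
      have yG: "y \<in> G" and zG: "z \<in> G" using y z Sf Sg by auto
      have 1: "mul (iv z) (mul (iv y) x) = mul (iv (mul y z)) x"
        using yG zG x by (simp add: iv_mul assoc swap3)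
      have 2: "\<sigma> z (mul (iv y) x) * \<sigma> y x = \<sigma> y (mul y z) * \<sigma> (mul y z) x"
        using yG zG x by (simp add: \<sigma>_r \<sigma>_l \<sigma>_iv_r \<sigma>_skew[of y z] mult_ac)
      show "f y * g z * h (mul (iv z) (mul (iv y) x)) * \<sigma> z (mul (iv y) x) * \<sigma> y x =
            f y * g z * \<sigma> y (mul y z) * h (mul (iv (mul y z)) x) * \<sigma> (mul y z) x"
      proof -
        have "f y * g z * h (mul (iv z) (mul (iv y) x)) * \<sigma> z (mul (iv y) x) * \<sigma> y x
            = (f y * g z * h (mul (iv z) (mul (iv y) x))) * (\<sigma> z (mul (iv y) x) * \<sigma> y x)"
          by (simp only: mult.assoc)
        also have "\<dots> = (f y * g z * h (mul (iv (mul y z)) x)) * (\<sigma> y (mul y z) * \<sigma> (mul y z) x)"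
          by (simp only: 1 2)
        also have "\<dots> = f y * g z * \<sigma> y (mul y z) * h (mul (iv (mul y z)) x) * \<sigma> (mul y z) x"
          by (simp only: ac_simps)
        finally show ?thesis .
      qed
    qed
    also have "\<dots> = (\<Sum>y\<in>Sf. \<Sum>w\<in>W. f y * g (mul (iv y) w) * \<sigma> y w * h (mul (iv w) x) * \<sigma> w x)"
    proof (rule sum.cong[OF refl])
      fix y assume y: "y \<in> Sf"
      have yG: "y \<in> G" using y Sf by auto
      define F where "F w = f y * g (mul (iv y) w) * \<sigma> y w * h (mul (iv w) x) * \<sigma> w x" for w
      have "(\<Sum>w\<in>W. F w) = gsum G F"
      proof (rule gsum_eq[symmetric, OF W])
        fix w assume w: "w \<in> G" "w \<notin> W"
        show "F w = 0"
        proof (rule ccontr)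
          assume "F w \<noteq> 0"
          then have "mul (iv y) w \<in> Sg" by (auto simp: F_def Sg_def spt_def)
          then have "mul y (mul (iv y) w) \<in> W" using pset_mem[OF y] W_def by blast
          then show False using w yG by simp
        qed
      qed
      also have "\<dots> = gsum G (\<lambda>z. F (mul y z))" by (rule gsum_shift[OF yG, symmetric])
      also have "\<dots> = (\<Sum>z\<in>Sg. F (mul y z))"
      proof (rule gsum_eq[OF Sg])
        fix z assume "z \<in> G" "z \<notin> Sg"
        then show "F (mul y z) = 0" using yG by (simp add: F_def Sg_def spt_def)
      qed
      also have "\<dots> = (\<Sum>z\<in>Sg. f y * g z * \<sigma> y (mul y z) * h (mul (iv (mul y z)) x) * \<sigma> (mul y z) x)"
        by (rule sum.cong[OF refl]) (use Sg yG in \<open>auto simp: F_def\<close>)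
      finally show "(\<Sum>z\<in>Sg. f y * g z * \<sigma> y (mul y z) * h (mul (iv (mul y z)) x) * \<sigma> (mul y z) x)
          = (\<Sum>w\<in>W. f y * g (mul (iv y) w) * \<sigma> y w * h (mul (iv w) x) * \<sigma> w x)"
        by (simp add: F_def)
    qed
    also have "\<dots> = (\<Sum>w\<in>W. \<Sum>y\<in>Sf. f y * g (mul (iv y) w) * \<sigma> y w * h (mul (iv w) x) * \<sigma> w x)"
      by (rule sum.swap)
    also have "\<dots> = (\<Sum>w\<in>W. conv f g w * h (mul (iv w) x) * \<sigma> w x)"
    proof (rule sum.cong[OF refl])
      fix w assume w: "w \<in> W"
      have "conv f g w = (\<Sum>y\<in>Sf. f y * g (mul (iv y) w) * \<sigma> y w)"
        using Sf w W Sf_def by (intro conv_sum) auto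
      then show "(\<Sum>y\<in>Sf. f y * g (mul (iv y) w) * \<sigma> y w * h (mul (iv w) x) * \<sigma> w x) =
           conv f g w * h (mul (iv w) x) * \<sigma> w x"
        by (simp add: sum_distrib_right)
    qed
    also have "\<dots> = conv (conv f g) h x"
      using W x conv_spt[OF f, of g] Sf_def Sg_def W_def by (intro conv_sum[symmetric]) auto
    finally show ?thesis .
  qed
qed

end

context twg begin

lemma sum_transport:
  assumes A: "finite A" "A \<subseteq> G" and B: "finite B" "B \<subseteq> G" and h: "bij_betw h G G"
    and FA: "\<And>x. x \<in> G \<Longrightarrow> x \<notin> A \<Longrightarrow> F x = 0"
    and FB: "\<And>x. x \<in> G \<Longrightarrow> x \<notin> B \<Longrightarrow> F (h x) = 0"
  shows "(\<Sum>x\<in>A. F x) = (\<Sum>x\<in>B. F (h x))"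
proof -
  have "(\<Sum>x\<in>A. F x) = gsum G F" by (rule gsum_eq[symmetric, OF A FA])
  also have "\<dots> = gsum G (\<lambda>x. F (h x))" by (rule gsum_reindex[OF h, symmetric])
  also have "\<dots> = (\<Sum>x\<in>B. F (h x))" by (rule gsum_eq[OF B FB])
  finally show ?thesis .
qed

lemma ip_sum_l:
  assumes "finite A" "A \<subseteq> G" "spt u \<subseteq> A"
  shows "ip u v = (\<Sum>x\<in>A. u x * cnj (v x))"
  unfolding ip_def
proof (rule gsum_eq[OF assms(1,2)])
  fix x assume "x \<in> G" "x \<notin> A"
  then have "u x = 0" using assms(3) by (auto simp: spt_def)
  then show "u x * cnj (v x) = 0" by simp
qed

lemma ip_sum_r:
  assumes "finite A" "A \<subseteq> G" "spt v \<subseteq> A"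
  shows "ip u v = (\<Sum>x\<in>A. u x * cnj (v x))"
  unfolding ip_def
proof (rule gsum_eq[OF assms(1,2)])
  fix x assume "x \<in> G" "x \<notin> A"
  then have "v x = 0" using assms(3) by (auto simp: spt_def)
  then show "u x * cnj (v x) = 0" by simp
qed

lemma ip_self:
  assumes u: "fs u" shows "ip u u = complex_of_real ((l2norm u)\<^sup>2)"
proof -
  have fin: "finite (spt u)" "spt u \<subseteq> G" using fsD[OF u] by auto
  have "ip u u = (\<Sum>x\<in>spt u. u x * cnj (u x))" by (rule ip_sum_l[OF fin]) simp
  also have "\<dots> = (\<Sum>x\<in>spt u. complex_of_real ((cmod (u x))\<^sup>2))"
    by (simp only: complex_norm_square)
  also have "\<dots> = complex_of_real (\<Sum>x\<in>spt u. (cmod (u x))\<^sup>2)" by simp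
  also have "(\<Sum>x\<in>spt u. (cmod (u x))\<^sup>2) = (l2norm u)\<^sup>2"
    using l2_sum[of "spt u" u] fin by (simp add: sum_nonneg)
  finally show ?thesis .
qed

lemma ip_CS:
  assumes u: "fs u" and v: "fs v" shows "cmod (ip u v) \<le> l2norm u * l2norm v"
proof -
  define A where "A = spt u \<union> spt v"
  have A: "finite A" "A \<subseteq> G" using fsD[OF u] fsD[OF v] A_def by auto
  have "ip u v = (\<Sum>x\<in>A. u x * cnj (v x))" by (rule ip_sum_l[OF A]) (simp add: A_def)
  then have "cmod (ip u v) \<le> (\<Sum>x\<in>A. cmod (u x * cnj (v x)))" by (simp only: norm_sum)
  also have "\<dots> = (\<Sum>x\<in>A. \<bar>cmod (u x)\<bar> * \<bar>cmod (v x)\<bar>)" by (simp add: norm_mult)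
  also have "\<dots> \<le> L2_set (\<lambda>x. cmod (u x)) A * L2_set (\<lambda>x. cmod (v x)) A"
    by (rule L2_set_mult_ineq)
  also have "\<dots> = l2norm u * l2norm v"
    using l2_L2[of A u] l2_L2[of A v] A A_def by simp
  finally show ?thesis .
qed

definition selfadj :: "('c \<Rightarrow> complex) \<Rightarrow> bool" where
  "selfadj f \<longleftrightarrow> (\<forall>y\<in>G. f (iv y) = cnj (f y))"

lemma conv_selfadj:
  assumes f: "fs f" and sa: "selfadj f" and xi: "fs \<xi>" and eta: "fs \<eta>"
  shows "ip (conv f \<xi>) \<eta> = ip \<xi> (conv f \<eta>)"
proof -
  define Sf where "Sf = spt f"
  define Sx where "Sx = spt \<xi>"
  define Se where "Se = spt \<eta>"
  have Sf: "finite Sf" "Sf \<subseteq> G" using fsD[OF f] Sf_def by auto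
  have Sx: "finite Sx" "Sx \<subseteq> G" using fsD[OF xi] Sx_def by auto
  have Se: "finite Se" "Se \<subseteq> G" using fsD[OF eta] Se_def by auto
  have "ip (conv f \<xi>) \<eta> = (\<Sum>x\<in>Se. conv f \<xi> x * cnj (\<eta> x))"
    by (rule ip_sum_r[OF Se]) (simp add: Se_def)
  also have "\<dots> = (\<Sum>x\<in>Se. \<Sum>y\<in>Sf. f y * \<xi> (mul (iv y) x) * \<sigma> y x * cnj (\<eta> x))"
  proof (rule sum.cong[OF refl])
    fix x assume x: "x \<in> Se"
    have "conv f \<xi> x = (\<Sum>y\<in>Sf. f y * \<xi> (mul (iv y) x) * \<sigma> y x)"
      using x Se Sf by (intro conv_sum) (auto simp: Sf_def)
    then show "conv f \<xi> x * cnj (\<eta> x) = (\<Sum>y\<in>Sf. f y * \<xi> (mul (iv y) x) * \<sigma> y x * cnj (\<eta> x))"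
      by (simp add: sum_distrib_right)
  qed
  also have "\<dots> = (\<Sum>y\<in>Sf. \<Sum>x\<in>Se. f y * \<xi> (mul (iv y) x) * \<sigma> y x * cnj (\<eta> x))"
    by (rule sum.swap)
  also have "\<dots> = (\<Sum>y\<in>Sf. \<Sum>u\<in>Sx. f y * \<xi> u * \<sigma> y u * cnj (\<eta> (mul y u)))"
  proof (rule sum.cong[OF refl])
    fix y assume y: "y \<in> Sf"
    have yG: "y \<in> G" using y Sf by auto
    have "(\<Sum>x\<in>Se. f y * \<xi> (mul (iv y) x) * \<sigma> y x * cnj (\<eta> x))
        = (\<Sum>u\<in>Sx. f y * \<xi> (mul (iv y) (mul y u)) * \<sigma> y (mul y u) * cnj (\<eta> (mul y u)))"
    proof (rule sum_transport[OF Se Sx bij_mul[OF yG]])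
      fix x assume "x \<in> G" "x \<notin> Se"
      then show "f y * \<xi> (mul (iv y) x) * \<sigma> y x * cnj (\<eta> x) = 0" by (simp add: Se_def spt_def)
    next
      fix u assume "u \<in> G" "u \<notin> Sx"
      then show "f y * \<xi> (mul (iv y) (mul y u)) * \<sigma> y (mul y u) * cnj (\<eta> (mul y u)) = 0"
        using yG by (simp add: Sx_def spt_def)
    qed
    also have "\<dots> = (\<Sum>u\<in>Sx. f y * \<xi> u * \<sigma> y u * cnj (\<eta> (mul y u)))"
    proof (rule sum.cong[OF refl])
      fix u assume "u \<in> Sx"
      then have "u \<in> G" using Sx by auto
      then show "f y * \<xi> (mul (iv y) (mul y u)) * \<sigma> y (mul y u) * cnj (\<eta> (mul y u))
          = f y * \<xi> u * \<sigma> y u * cnj (\<eta> (mul y u))" using yG by simp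
    qed
    finally show "(\<Sum>x\<in>Se. f y * \<xi> (mul (iv y) x) * \<sigma> y x * cnj (\<eta> x))
        = (\<Sum>u\<in>Sx. f y * \<xi> u * \<sigma> y u * cnj (\<eta> (mul y u)))" .
  qed
  also have "\<dots> = (\<Sum>u\<in>Sx. \<Sum>y\<in>Sf. f y * \<xi> u * \<sigma> y u * cnj (\<eta> (mul y u)))"
    by (rule sum.swap)
  also have "\<dots> = (\<Sum>u\<in>Sx. \<Sum>y\<in>Sf. \<xi> u * cnj (f y) * cnj (\<eta> (mul (iv y) u)) * cnj (\<sigma> y u))"
  proof (rule sum.cong[OF refl])
    fix u assume u: "u \<in> Sx"
    have uG: "u \<in> G" using u Sx by auto
    have "(\<Sum>y\<in>Sf. \<xi> u * cnj (f y) * cnj (\<eta> (mul (iv y) u)) * cnj (\<sigma> y u))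
        = (\<Sum>y\<in>Sf. \<xi> u * cnj (f (iv y)) * cnj (\<eta> (mul (iv (iv y)) u)) * cnj (\<sigma> (iv y) u))"
    proof (rule sum_transport[OF Sf Sf bij_iv])
      fix y assume "y \<in> G" "y \<notin> Sf"
      then show "\<xi> u * cnj (f y) * cnj (\<eta> (mul (iv y) u)) * cnj (\<sigma> y u) = 0"
        by (simp add: Sf_def spt_def)
    next
      fix y assume "y \<in> G" "y \<notin> Sf"
      then show "\<xi> u * cnj (f (iv y)) * cnj (\<eta> (mul (iv (iv y)) u)) * cnj (\<sigma> (iv y) u) = 0"
        using sa by (simp add: Sf_def spt_def selfadj_def)
    qed
    also have "\<dots> = (\<Sum>y\<in>Sf. f y * \<xi> u * \<sigma> y u * cnj (\<eta> (mul y u)))"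
    proof (rule sum.cong[OF refl])
      fix y assume "y \<in> Sf"
      then have yG: "y \<in> G" using Sf by auto
      have "cnj (f (iv y)) = f y" using sa yG by (simp add: selfadj_def)
      moreover have "cnj (\<sigma> (iv y) u) = \<sigma> y u" using yG uG by (simp add: \<sigma>_iv_l)
      ultimately show "\<xi> u * cnj (f (iv y)) * cnj (\<eta> (mul (iv (iv y)) u)) * cnj (\<sigma> (iv y) u)
          = f y * \<xi> u * \<sigma> y u * cnj (\<eta> (mul y u))" using yG by (simp add: ac_simps)
    qed
    finally show "(\<Sum>y\<in>Sf. f y * \<xi> u * \<sigma> y u * cnj (\<eta> (mul y u)))
        = (\<Sum>y\<in>Sf. \<xi> u * cnj (f y) * cnj (\<eta> (mul (iv y) u)) * cnj (\<sigma> y u))" by simp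
  qed
  also have "\<dots> = (\<Sum>u\<in>Sx. \<xi> u * cnj (conv f \<eta> u))"
  proof (rule sum.cong[OF refl])
    fix u assume u: "u \<in> Sx"
    have "conv f \<eta> u = (\<Sum>y\<in>Sf. f y * \<eta> (mul (iv y) u) * \<sigma> y u)"
      using u Sx Sf by (intro conv_sum) (auto simp: Sf_def)
    then show "(\<Sum>y\<in>Sf. \<xi> u * cnj (f y) * cnj (\<eta> (mul (iv y) u)) * cnj (\<sigma> y u)) = \<xi> u * cnj (conv f \<eta> u)"
      by (simp add: sum_distrib_left mult.assoc)
  qed
  also have "\<dots> = ip \<xi> (conv f \<eta>)"
    by (rule ip_sum_l[OF Sx, symmetric]) (simp add: Sx_def)
  finally show ?thesis .
qed

end

context twg begin

lemma transl_l2: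
  assumes xi: "fs \<xi>" and y: "y \<in> G" and A: "finite A" "A \<subseteq> G"
  shows "L2_set (\<lambda>x. cmod (\<xi> (mul (iv y) x))) A \<le> l2norm \<xi>"
proof -
  define Sx where "Sx = spt \<xi>"
  have Sx: "finite Sx" "Sx \<subseteq> G" using fsD[OF xi] Sx_def by auto
  define B where "B = A \<union> mul y ` Sx"
  have B: "finite B" "B \<subseteq> G" using A Sx y B_def by auto
  define F where "F x = (cmod (\<xi> (mul (iv y) x)))\<^sup>2" for x
  have "(\<Sum>x\<in>A. F x) \<le> (\<Sum>x\<in>B. F x)"
    by (rule sum_mono2[OF B(1)]) (auto simp: B_def F_def)
  also have "\<dots> = (\<Sum>u\<in>Sx. F (mul y u))"
  proof (rule sum_transport[OF B Sx bij_mul[OF y]])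
    fix x assume x: "x \<in> G" "x \<notin> B"
    show "F x = 0"
    proof (rule ccontr)
      assume "F x \<noteq> 0"
      then have "mul (iv y) x \<in> Sx" by (simp add: F_def Sx_def spt_def)
      then have "mul y (mul (iv y) x) \<in> B" unfolding B_def by blast
      then show False using x y by simp
    qed
  next
    fix u assume "u \<in> G" "u \<notin> Sx"
    then show "F (mul y u) = 0" using y by (simp add: F_def Sx_def spt_def)
  qed
  also have "\<dots> = (\<Sum>u\<in>Sx. (cmod (\<xi> u))\<^sup>2)"
  proof (rule sum.cong[OF refl])
    fix u assume "u \<in> Sx" then have "u \<in> G" using Sx by auto
    then show "F (mul y u) = (cmod (\<xi> u))\<^sup>2" using y by (simp add: F_def)
  qed
  finally have "(\<Sum>x\<in>A. F x) \<le> (\<Sum>u\<in>Sx. (cmod (\<xi> u))\<^sup>2)" .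
  then have "sqrt (\<Sum>x\<in>A. F x) \<le> sqrt (\<Sum>u\<in>Sx. (cmod (\<xi> u))\<^sup>2)" by simp
  then show ?thesis using l2_sum[of Sx \<xi>] Sx Sx_def by (simp add: L2_set_def F_def)
qed

lemma l1_nonneg: "l1 f \<ge> 0" by (simp add: l1_def sum_nonneg)

lemma conv_l1:
  assumes f: "fs f" and xi: "fs \<xi>"
  shows "l2norm (conv f \<xi>) \<le> l1 f * l2norm \<xi>"
proof -
  define Sf where "Sf = spt f"
  have Sf: "finite Sf" "Sf \<subseteq> G" using fsD[OF f] Sf_def by auto
  define A where "A = pset (spt f) (spt \<xi>)"
  have A: "finite A" "A \<subseteq> G" using fsD[OF f] fsD[OF xi] A_def pset_sub by auto
  have "l2norm (conv f \<xi>) = L2_set (\<lambda>x. cmod (conv f \<xi> x)) A"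
    using conv_spt[OF f, of \<xi>] A A_def by (intro l2_L2) auto
  also have "\<dots> \<le> L2_set (\<lambda>x. \<Sum>y\<in>Sf. cmod (f y) * cmod (\<xi> (mul (iv y) x))) A"
  proof (rule L2_set_mono)
    fix x assume x: "x \<in> A"
    then have xG: "x \<in> G" using A by auto
    have "conv f \<xi> x = (\<Sum>y\<in>Sf. f y * \<xi> (mul (iv y) x) * \<sigma> y x)"
      using xG Sf by (intro conv_sum) (auto simp: Sf_def)
    then have "cmod (conv f \<xi> x) \<le> (\<Sum>y\<in>Sf. cmod (f y * \<xi> (mul (iv y) x) * \<sigma> y x))"
      by (simp only: norm_sum)
    also have "\<dots> = (\<Sum>y\<in>Sf. cmod (f y) * cmod (\<xi> (mul (iv y) x)))"
    proof (rule sum.cong[OF refl])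
      fix y assume "y \<in> Sf" then have "y \<in> G" using Sf by auto
      then show "cmod (f y * \<xi> (mul (iv y) x) * \<sigma> y x) = cmod (f y) * cmod (\<xi> (mul (iv y) x))"
        using xG by (simp add: norm_mult \<sigma>_mod)
    qed
    finally show "cmod (conv f \<xi> x) \<le> (\<Sum>y\<in>Sf. cmod (f y) * cmod (\<xi> (mul (iv y) x)))" .
  qed simp
  also have "\<dots> \<le> (\<Sum>y\<in>Sf. L2_set (\<lambda>x. cmod (f y) * cmod (\<xi> (mul (iv y) x))) A)"
    by (rule L2_set_sum_le)
  also have "\<dots> = (\<Sum>y\<in>Sf. cmod (f y) * L2_set (\<lambda>x. cmod (\<xi> (mul (iv y) x))) A)"
    by (simp add: L2_set_right_distrib)
  also have "\<dots> \<le> (\<Sum>y\<in>Sf. cmod (f y) * l2norm \<xi>)"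
  proof (rule sum_mono)
    fix y assume "y \<in> Sf" then have "y \<in> G" using Sf by auto
    then show "cmod (f y) * L2_set (\<lambda>x. cmod (\<xi> (mul (iv y) x))) A \<le> cmod (f y) * l2norm \<xi>"
      by (intro mult_left_mono transl_l2[OF xi _ A]) auto
  qed
  also have "\<dots> = l1 f * l2norm \<xi>" by (simp add: l1_def Sf_def sum_distrib_right)
  finally show ?thesis .
qed

abbreviation Xs where "Xs \<equiv> {\<xi>. fs \<xi> \<and> l2norm \<xi> \<le> 1}"

lemma fs_zero: "fs (\<lambda>x. 0)" by (rule fsI) (auto simp: spt_def)

lemma l2_zero_le1: "l2norm (\<lambda>x. 0) \<le> 1" by (subst l2_zero) simp

lemma Xs_ne: "(\<lambda>x. 0) \<in> Xs" by (intro CollectI conjI fs_zero l2_zero_le1)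

lemma nrm_bdd: "fs f \<Longrightarrow> bdd_above ((\<lambda>\<xi>. l2norm (conv f \<xi>)) ` Xs)"
proof -
  assume f: "fs f"
  show ?thesis
  proof (rule bdd_aboveI2)
    fix \<xi> assume "\<xi> \<in> Xs"
    then have xi: "fs \<xi>" "l2norm \<xi> \<le> 1" by auto
    have "l2norm (conv f \<xi>) \<le> l1 f * l2norm \<xi>" by (rule conv_l1[OF f xi(1)])
    also have "\<dots> \<le> l1 f * 1" by (rule mult_left_mono[OF xi(2) l1_nonneg])
    finally show "l2norm (conv f \<xi>) \<le> l1 f" by simp
  qed
qed

lemma nrm_ge: "fs f \<Longrightarrow> fs \<xi> \<Longrightarrow> l2norm \<xi> \<le> 1 \<Longrightarrow> l2norm (conv f \<xi>) \<le> nrm f"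
  unfolding twisted_cstar_norm_def by (rule cSUP_upper) (auto intro: nrm_bdd)

lemma nrm_le: "(\<And>\<xi>. fs \<xi> \<Longrightarrow> l2norm \<xi> \<le> 1 \<Longrightarrow> l2norm (conv f \<xi>) \<le> M) \<Longrightarrow> nrm f \<le> M"
  unfolding twisted_cstar_norm_def by (rule cSUP_least) (use Xs_ne in auto)

lemma nrm_nonneg: "fs f \<Longrightarrow> 0 \<le> nrm f"
  using nrm_ge[OF _ fs_zero l2_zero_le1] l2_nonneg by (meson order_trans)

lemma conv_zero: "fs f \<Longrightarrow> conv f (\<lambda>x. 0) = (\<lambda>x. 0)"
  using conv_scale[of f 0 "\<lambda>x. 0"] by simp

lemma nrm_bound:
  assumes f: "fs f" and xi: "fs \<xi>"
  shows "l2norm (conv f \<xi>) \<le> nrm f * l2norm \<xi>"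
proof (cases "l2norm \<xi> = 0")
  case True
  then have "\<xi> = (\<lambda>x. 0)" using l2_eq0 fsD[OF xi] by blast
  then have "conv f \<xi> = (\<lambda>x. 0)" using conv_zero[OF f] by simp
  then have "l2norm (conv f \<xi>) = 0" by (simp only: l2_zero)
  then show ?thesis using True by simp
next
  case False
  then have pos: "l2norm \<xi> > 0" using l2_nonneg[of \<xi>] by simp
  define c where "c = complex_of_real (1 / l2norm \<xi>)"
  have cm: "cmod c = 1 / l2norm \<xi>" using pos by (simp add: c_def norm_divide)
  define \<xi>' where "\<xi>' = (\<lambda>x. c * \<xi> x)"
  have c0: "c \<noteq> 0" using pos by (simp add: c_def)
  have spt': "spt \<xi>' = spt \<xi>" using c0 by (auto simp: spt_def \<xi>'_def)
  have fs': "fs \<xi>'" using fsD[OF xi] spt' by (intro fsI) auto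
  have n': "l2norm \<xi>' = 1" using l2_scale[of \<xi> c] fsD[OF xi] cm pos by (simp add: \<xi>'_def)
  have "l2norm (conv f \<xi>') \<le> nrm f" using nrm_ge[OF f fs'] n' by simp
  moreover have "l2norm (conv f \<xi>') = cmod c * l2norm (conv f \<xi>)"
    using conv_scale[OF f, of c \<xi>] l2_scale[of "conv f \<xi>" c] fsD[OF fs_conv[OF f xi]]
    by (simp add: \<xi>'_def)
  ultimately have "l2norm (conv f \<xi>) / l2norm \<xi> \<le> nrm f" using cm by simp
  then show ?thesis using pos by (simp add: divide_le_eq mult.commute)
qed

lemma iter_fs: "fs f \<Longrightarrow> fs \<xi> \<Longrightarrow> fs ((conv f ^^ m) \<xi>)"
  by (induction m) (auto intro: fs_conv)

lemma iter_bound: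
  assumes f: "fs f" and xi: "fs \<xi>"
  shows "l2norm ((conv f ^^ m) \<xi>) \<le> nrm f ^ m * l2norm \<xi>"
proof (induction m)
  case 0 then show ?case by simp
next
  case (Suc m)
  have "l2norm ((conv f ^^ Suc m) \<xi>) = l2norm (conv f ((conv f ^^ m) \<xi>))" by simp
  also have "\<dots> \<le> nrm f * l2norm ((conv f ^^ m) \<xi>)" by (rule nrm_bound[OF f iter_fs[OF f xi]])
  also have "\<dots> \<le> nrm f * (nrm f ^ m * l2norm \<xi>)"
    by (rule mult_left_mono[OF Suc.IH nrm_nonneg[OF f]])
  finally show ?case by (simp add: mult.assoc)
qed

definition delta where "delta = (\<lambda>x. if x = e then (1::complex) else 0)"

definition fpow where "fpow f m = (conv f ^^ m) delta"

lemma fs_delta': "fs delta" using fs_delta by (simp add: delta_def)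

lemma fpow_fs: "fs f \<Longrightarrow> fs (fpow f m)"
  unfolding fpow_def by (rule iter_fs[OF _ fs_delta'])

lemma fpow_0: "fpow f 0 = delta" by (simp add: fpow_def)
lemma fpow_Suc: "fpow f (Suc m) = conv f (fpow f m)" by (simp add: fpow_def)

lemma fpow_conv:
  assumes f: "fs f" and xi: "fs \<xi>"
  shows "conv (fpow f m) \<xi> = (conv f ^^ m) \<xi>"
proof (induction m)
  case 0 then show ?case using conv_delta[OF xi] by (simp add: fpow_0 delta_def)
next
  case (Suc m)
  have "conv (fpow f (Suc m)) \<xi> = conv (conv f (fpow f m)) \<xi>" by (simp add: fpow_Suc)
  also have "\<dots> = conv f (conv (fpow f m) \<xi>)" by (rule conv_assoc[symmetric, OF f fpow_fs[OF f] xi])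
  also have "\<dots> = (conv f ^^ Suc m) \<xi>" using Suc.IH by simp
  finally show ?case .
qed

lemma l2_delta: "l2norm delta = 1"
  using l2_sum[of "{e}" delta] by (simp add: delta_def spt_def)

lemma fpow_l2: "fs f \<Longrightarrow> l2norm (fpow f m) \<le> nrm f ^ m"
  using iter_bound[OF _ fs_delta', of f m] by (simp add: fpow_def l2_delta)

lemma iter_l1: "fs f \<Longrightarrow> fs \<xi> \<Longrightarrow> l2norm ((conv f ^^ m) \<xi>) \<le> l1 (fpow f m) * l2norm \<xi>"
  using conv_l1[OF fpow_fs] fpow_conv by metis

lemma ip_pow:
  assumes f: "fs f" and sa: "selfadj f" and u: "fs u" and v: "fs v"
  shows "ip ((conv f ^^ i) u) ((conv f ^^ k) v) = ip ((conv f ^^ (i + k)) u) v"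
proof (induction k arbitrary: i)
  case 0 then show ?case by simp
next
  case (Suc k)
  have "ip ((conv f ^^ i) u) ((conv f ^^ Suc k) v) = ip ((conv f ^^ i) u) (conv f ((conv f ^^ k) v))"
    by simp
  also have "\<dots> = ip (conv f ((conv f ^^ i) u)) ((conv f ^^ k) v)"
    by (rule conv_selfadj[symmetric, OF f sa iter_fs[OF f u] iter_fs[OF f v]])
  also have "\<dots> = ip ((conv f ^^ Suc i) u) ((conv f ^^ k) v)" by simp
  also have "\<dots> = ip ((conv f ^^ (Suc i + k)) u) v" by (rule Suc.IH)
  finally show ?case by simp
qed

lemma sq_bound:
  assumes f: "fs f" and sa: "selfadj f" and xi: "fs \<xi>"
  shows "(l2norm ((conv f ^^ m) \<xi>))\<^sup>2 \<le> l2norm ((conv f ^^ (m + m)) \<xi>) * l2norm \<xi>"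
proof -
  have "complex_of_real ((l2norm ((conv f ^^ m) \<xi>))\<^sup>2) = ip ((conv f ^^ m) \<xi>) ((conv f ^^ m) \<xi>)"
    by (rule ip_self[symmetric, OF iter_fs[OF f xi]])
  also have "\<dots> = ip ((conv f ^^ (m + m)) \<xi>) \<xi>"
    using ip_pow[OF f sa xi xi, of m m] by simp
  finally have "(l2norm ((conv f ^^ m) \<xi>))\<^sup>2 = cmod (ip ((conv f ^^ (m + m)) \<xi>) \<xi>)"
    by (metis norm_of_real abs_of_nonneg zero_le_power2)
  also have "\<dots> \<le> l2norm ((conv f ^^ (m + m)) \<xi>) * l2norm \<xi>"
    by (rule ip_CS[OF iter_fs[OF f xi] xi])
  finally show ?thesis .
qed

lemma pow2_bound:
  assumes f: "fs f" and sa: "selfadj f"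
  shows "(\<And>\<xi>. fs \<xi> \<Longrightarrow> l2norm \<xi> \<le> 1 \<Longrightarrow> l2norm ((conv f ^^ (2^j)) \<xi>) \<le> L)
     \<Longrightarrow> fs \<xi> \<Longrightarrow> l2norm \<xi> \<le> 1 \<Longrightarrow> l2norm (conv f \<xi>) ^ (2^j) \<le> L"
proof (induction j arbitrary: L \<xi>)
  case 0 then show ?case by simp
next
  case (Suc j)
  have L0: "0 \<le> L" using Suc.prems(1)[OF fs_zero l2_zero_le1] l2_nonneg by (meson order_trans)
  have H: "l2norm ((conv f ^^ (2^j)) \<zeta>) \<le> sqrt L" if z: "fs \<zeta>" "l2norm \<zeta> \<le> 1" for \<zeta>
  proof -
    have "(l2norm ((conv f ^^ (2^j)) \<zeta>))\<^sup>2 \<le> l2norm ((conv f ^^ (2^j + 2^j)) \<zeta>) * l2norm \<zeta>"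
      by (rule sq_bound[OF f sa z(1)])
    also have "\<dots> \<le> L * 1"
      using Suc.prems(1)[OF z] z(2) l2_nonneg L0 by (intro mult_mono) (auto simp: mult_2)
    finally show ?thesis by (simp add: real_le_rsqrt)
  qed
  have "l2norm (conv f \<xi>) ^ (2^j) \<le> sqrt L" by (rule Suc.IH[OF H Suc.prems(2,3)]) auto
  then have "(l2norm (conv f \<xi>) ^ (2^j))\<^sup>2 \<le> (sqrt L)\<^sup>2"
    by (rule power_mono[OF _ zero_le_power[OF l2_nonneg]])
  then show ?case using L0 by (simp add: power_mult[symmetric] mult.commute)
qed

lemma nrm_pow2:
  assumes f: "fs f" and sa: "selfadj f"
    and H: "\<And>\<xi>. fs \<xi> \<Longrightarrow> l2norm \<xi> \<le> 1 \<Longrightarrow> l2norm ((conv f ^^ (2^j)) \<xi>) \<le> L"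
  shows "nrm f ^ (2^j) \<le> L"
proof -
  have L0: "0 \<le> L" using H[OF fs_zero l2_zero_le1] l2_nonneg by (meson order_trans)
  have m0: "(0::nat) < 2^j" by simp
  have "nrm f \<le> root (2^j) L"
  proof (rule nrm_le)
    fix \<xi> assume xi: "fs \<xi>" "l2norm \<xi> \<le> 1"
    have "l2norm (conv f \<xi>) ^ (2^j) \<le> L" by (rule pow2_bound[OF f sa H xi])
    then have "root (2^j) (l2norm (conv f \<xi>) ^ (2^j)) \<le> root (2^j) L"
      using m0 by (simp only: real_root_le_iff)
    then show "l2norm (conv f \<xi>) \<le> root (2^j) L"
      using real_root_power_cancel[OF m0 l2_nonneg[of "conv f \<xi>"]] by simp
  qed
  then have "nrm f ^ (2^j) \<le> root (2^j) L ^ (2^j)"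
    using nrm_nonneg[OF f] by (intro power_mono) auto
  also have "\<dots> = L" using m0 L0 by (simp add: real_root_pow_pos2)
  finally show ?thesis .
qed

end

locale twhom = S: twg G mul iv e \<tau> + T: twg G' mul' iv' e' \<sigma>'
  for G :: "'c set" and mul iv e \<tau> and G' :: "'d set" and mul' iv' e' \<sigma>' +
  fixes q :: "'c \<Rightarrow> 'd"
  assumes q_in: "x \<in> G \<Longrightarrow> q x \<in> G'"
    and q_mul: "x \<in> G \<Longrightarrow> y \<in> G \<Longrightarrow> q (mul x y) = mul' (q x) (q y)"
    and q_iv: "x \<in> G \<Longrightarrow> q (iv x) = iv' (q x)"
    and q_e: "q e = e'"
    and \<tau>_eq: "x \<in> G \<Longrightarrow> y \<in> G \<Longrightarrow> \<tau> x y = \<sigma>' (q x) (q y)"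
begin

definition push :: "('c \<Rightarrow> complex) \<Rightarrow> 'd \<Rightarrow> complex" where
  "push h x' = (if x' \<in> G' then (\<Sum>x\<in>{x\<in>G. q x = x' \<and> h x \<noteq> 0}. h x) else 0)"

lemma push_alt:
  assumes h: "S.fs h" and x': "x' \<in> G'"
  shows "push h x' = (\<Sum>x\<in>spt h. if q x = x' then h x else 0)"
proof -
  have sub: "spt h \<subseteq> G" "finite (spt h)" using S.fsD[OF h] by auto
  have "{x\<in>G. q x = x' \<and> h x \<noteq> 0} = {x\<in>spt h. q x = x'}" using sub by (auto simp: spt_def)
  then have "push h x' = (\<Sum>x\<in>{x\<in>spt h. q x = x'}. h x)" using x' by (simp add: push_def)
  also have "\<dots> = (\<Sum>x\<in>spt h. if q x = x' then h x else 0)"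
    using sub(2) by (simp add: sum.inter_filter)
  finally show ?thesis .
qed

lemma push_out: "x' \<notin> G' \<Longrightarrow> push h x' = 0" by (simp add: push_def)

lemma push_spt:
  assumes h: "S.fs h" shows "spt (push h) \<subseteq> q ` spt h"
proof
  fix x' assume "x' \<in> spt (push h)"
  then have nz: "push h x' \<noteq> 0" by (simp add: spt_def)
  then have x': "x' \<in> G'" using push_out by blast
  then have "(\<Sum>x\<in>spt h. if q x = x' then h x else 0) \<noteq> 0" using nz push_alt[OF h] by simp
  then obtain x where "x \<in> spt h" "(if q x = x' then h x else 0) \<noteq> 0"
    using sum.not_neutral_contains_not_neutral by blast
  then show "x' \<in> q ` spt h" by (auto split: if_splits)
qed

lemma push_fs:
  assumes h: "S.fs h" shows "T.fs (push h)"
proof (rule T.fsI)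
  have "finite (q ` spt h)" using S.fsD[OF h] by simp
  then show "finite (spt (push h))" using push_spt[OF h] by (rule finite_subset[rotated])
  have "q ` spt h \<subseteq> G'" using S.fsD[OF h] q_in by auto
  then show "spt (push h) \<subseteq> G'" using push_spt[OF h] by (rule subset_trans[rotated])
qed

lemma push_inj_val:
  assumes h: "S.fs h" and inj: "inj_on q (spt h)" and x: "x \<in> spt h"
  shows "push h (q x) = h x"
proof -
  have xG: "x \<in> G" using x S.fsD[OF h] by auto
  have "push h (q x) = (\<Sum>z\<in>spt h. if q z = q x then h z else 0)"
    using push_alt[OF h q_in[OF xG]] .
  also have "\<dots> = (\<Sum>z\<in>spt h. if z = x then h z else 0)"
  proof (rule sum.cong[OF refl])
    fix z assume z: "z \<in> spt h"
    have "q z = q x \<longleftrightarrow> z = x" using inj z x by (auto dest: inj_onD)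
    then show "(if q z = q x then h z else 0) = (if z = x then h z else 0)" by simp
  qed
  also have "\<dots> = h x" using x S.fsD[OF h] by (simp add: sum.delta)
  finally show ?thesis .
qed

lemma push_inj_l2:
  assumes h: "S.fs h" and inj: "inj_on q (spt h)"
  shows "l2norm (push h) = l2norm h"
proof -
  have fin: "finite (spt h)" using S.fsD[OF h] by auto
  have "l2norm (push h) = sqrt (\<Sum>x'\<in>q ` spt h. (cmod (push h x'))\<^sup>2)"
    using push_spt[OF h] fin by (intro l2_sum) auto
  also have "(\<Sum>x'\<in>q ` spt h. (cmod (push h x'))\<^sup>2) = (\<Sum>x\<in>spt h. (cmod (push h (q x)))\<^sup>2)"
    using sum.reindex[OF inj] by simp
  also have "\<dots> = (\<Sum>x\<in>spt h. (cmod (h x))\<^sup>2)"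
    using push_inj_val[OF h inj] by simp
  also have "sqrt \<dots> = l2norm h" using l2_sum[of "spt h" h] fin by simp
  finally show ?thesis .
qed

lemma push_l1:
  assumes h: "S.fs h" shows "l1 (push h) \<le> l1 h"
proof -
  have fin: "finite (spt h)" "spt h \<subseteq> G" using S.fsD[OF h] by auto
  have "l1 (push h) = (\<Sum>x'\<in>spt (push h). cmod (push h x'))" by (simp add: l1_def)
  also have "\<dots> \<le> (\<Sum>x'\<in>q ` spt h. cmod (push h x'))"
    using fin push_spt[OF h] by (intro sum_mono2) auto
  also have "\<dots> \<le> (\<Sum>x'\<in>q ` spt h. \<Sum>x\<in>{x\<in>spt h. q x = x'}. cmod (h x))"
  proof (rule sum_mono)
    fix x' assume "x' \<in> q ` spt h"
    then have x': "x' \<in> G'" using fin q_in by auto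
    have "push h x' = (\<Sum>x\<in>{x\<in>spt h. q x = x'}. h x)"
      using push_alt[OF h x'] fin by (simp add: sum.inter_filter)
    then show "cmod (push h x') \<le> (\<Sum>x\<in>{x\<in>spt h. q x = x'}. cmod (h x))"
      by (simp add: norm_sum)
  qed
  also have "\<dots> = (\<Sum>x\<in>spt h. cmod (h x))"
    using fin by (intro sum.group) auto
  also have "\<dots> = l1 h" by (simp add: l1_def)
  finally show ?thesis .
qed

lemma push_alt2:
  assumes h: "S.fs h" and x': "x' \<in> G'"
  shows "push h x' = (\<Sum>x\<in>{x\<in>spt h. q x = x'}. h x)"
  using push_alt[OF h x'] S.fsD[OF h] by (simp add: sum.inter_filter)

lemma push_conv:
  assumes h1: "S.fs h1" and h2: "S.fs h2"
  shows "push (S.conv h1 h2) = T.conv (push h1) (push h2)"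
proof
  fix x'
  show "push (S.conv h1 h2) x' = T.conv (push h1) (push h2) x'"
  proof (cases "x' \<in> G'")
    case False then show ?thesis by (simp add: push_out T.conv_out)
  next
    case x': True
    define S1 where "S1 = spt h1"
    define S2 where "S2 = spt h2"
    define W where "W = S.pset S1 S2"
    have S1: "finite S1" "S1 \<subseteq> G" using S.fsD[OF h1] S1_def by auto
    have S2: "finite S2" "S2 \<subseteq> G" using S.fsD[OF h2] S2_def by auto
    have W: "finite W" "W \<subseteq> G" using S1 S2 W_def S.pset_sub by auto
    have c: "S.fs (S.conv h1 h2)" by (rule S.fs_conv[OF h1 h2])
    have "push (S.conv h1 h2) x' = (\<Sum>w\<in>spt (S.conv h1 h2). if q w = x' then S.conv h1 h2 w else 0)"
      by (rule push_alt[OF c x'])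
    also have "\<dots> = (\<Sum>w\<in>W. if q w = x' then S.conv h1 h2 w else 0)"
      using W S.conv_spt[OF h1, of h2] W_def S1_def S2_def
      by (intro sum.mono_neutral_left) (auto simp: spt_def)
    also have "\<dots> = (\<Sum>w\<in>W. \<Sum>y\<in>S1. if q w = x' then h1 y * h2 (mul (iv y) w) * \<tau> y w else 0)"
    proof (rule sum.cong[OF refl])
      fix w assume "w \<in> W"
      then have wG: "w \<in> G" using W by auto
      have "S.conv h1 h2 w = (\<Sum>y\<in>S1. h1 y * h2 (mul (iv y) w) * \<tau> y w)"
        using S1 wG by (intro S.conv_sum) (auto simp: S1_def)
      then show "(if q w = x' then S.conv h1 h2 w else 0)
          = (\<Sum>y\<in>S1. if q w = x' then h1 y * h2 (mul (iv y) w) * \<tau> y w else 0)"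
        by (cases "q w = x'") simp_all
    qed
    also have "\<dots> = (\<Sum>y\<in>S1. \<Sum>w\<in>W. if q w = x' then h1 y * h2 (mul (iv y) w) * \<tau> y w else 0)"
      by (rule sum.swap)
    also have "\<dots> = (\<Sum>y\<in>S1. \<Sum>z\<in>S2. h1 y * (if q z = mul' (iv' (q y)) x' then h2 z else 0) * \<sigma>' (q y) x')"
    proof (rule sum.cong[OF refl])
      fix y assume y: "y \<in> S1"
      have yG: "y \<in> G" using y S1 by auto
      have "(\<Sum>w\<in>W. if q w = x' then h1 y * h2 (mul (iv y) w) * \<tau> y w else 0)
          = (\<Sum>z\<in>S2. if q (mul y z) = x' then h1 y * h2 (mul (iv y) (mul y z)) * \<tau> y (mul y z) else 0)"
      proof (rule S.sum_transport[OF W S2 S.bij_mul[OF yG]])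
        fix w assume w: "w \<in> G" "w \<notin> W"
        show "(if q w = x' then h1 y * h2 (mul (iv y) w) * \<tau> y w else 0) = 0"
        proof (rule ccontr)
          assume "(if q w = x' then h1 y * h2 (mul (iv y) w) * \<tau> y w else 0) \<noteq> 0"
          then have "mul (iv y) w \<in> S2" by (auto simp: S2_def spt_def split: if_splits)
          then have "mul y (mul (iv y) w) \<in> W" unfolding W_def by (rule S.pset_mem[OF y])
          then show False using w yG by simp
        qed
      next
        fix z assume "z \<in> G" "z \<notin> S2"
        then show "(if q (mul y z) = x' then h1 y * h2 (mul (iv y) (mul y z)) * \<tau> y (mul y z) else 0) = 0"
          using yG by (simp add: S2_def spt_def)
      qed
      also have "\<dots> = (\<Sum>z\<in>S2. h1 y * (if q z = mul' (iv' (q y)) x' then h2 z else 0) * \<sigma>' (q y) x')"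
      proof (rule sum.cong[OF refl])
        fix z assume "z \<in> S2"
        then have zG: "z \<in> G" using S2 by auto
        have qy: "q y \<in> G'" and qz: "q z \<in> G'" using q_in yG zG by auto
        have eqv: "q (mul y z) = x' \<longleftrightarrow> q z = mul' (iv' (q y)) x'"
        proof
          assume "q (mul y z) = x'"
          then have "mul' (q y) (q z) = x'" using q_mul yG zG by simp
          then show "q z = mul' (iv' (q y)) x'" using qy qz by auto
        next
          assume "q z = mul' (iv' (q y)) x'"
          then show "q (mul y z) = x'" using q_mul yG zG qy x' by simp
        qed
        have ts: "\<tau> y (mul y z) = \<sigma>' (q y) (q (mul y z))" using \<tau>_eq yG zG by simp
        show "(if q (mul y z) = x' then h1 y * h2 (mul (iv y) (mul y z)) * \<tau> y (mul y z) else 0)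
            = h1 y * (if q z = mul' (iv' (q y)) x' then h2 z else 0) * \<sigma>' (q y) x'"
          using eqv ts yG zG by (cases "q (mul y z) = x'") simp_all
      qed
      finally show "(\<Sum>w\<in>W. if q w = x' then h1 y * h2 (mul (iv y) w) * \<tau> y w else 0)
          = (\<Sum>z\<in>S2. h1 y * (if q z = mul' (iv' (q y)) x' then h2 z else 0) * \<sigma>' (q y) x')" .
    qed
    also have "\<dots> = (\<Sum>y\<in>S1. h1 y * push h2 (mul' (iv' (q y)) x') * \<sigma>' (q y) x')"
    proof (rule sum.cong[OF refl])
      fix y assume "y \<in> S1"
      then have qy: "q y \<in> G'" using S1 q_in by auto
      have "push h2 (mul' (iv' (q y)) x') = (\<Sum>z\<in>S2. if q z = mul' (iv' (q y)) x' then h2 z else 0)"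
        unfolding S2_def by (rule push_alt[OF h2]) (use qy x' in simp)
      then show "(\<Sum>z\<in>S2. h1 y * (if q z = mul' (iv' (q y)) x' then h2 z else 0) * \<sigma>' (q y) x')
          = h1 y * push h2 (mul' (iv' (q y)) x') * \<sigma>' (q y) x'"
        by (simp add: sum_distrib_left sum_distrib_right)
    qed
    also have "\<dots> = (\<Sum>y'\<in>q ` S1. \<Sum>y\<in>{y\<in>S1. q y = y'}. h1 y * push h2 (mul' (iv' (q y)) x') * \<sigma>' (q y) x')"
      by (rule sum.group[symmetric]) (use S1 in auto)
    also have "\<dots> = (\<Sum>y'\<in>q ` S1. push h1 y' * push h2 (mul' (iv' y') x') * \<sigma>' y' x')"
    proof (rule sum.cong[OF refl])
      fix y' assume "y' \<in> q ` S1"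
      then have y': "y' \<in> G'" using S1 q_in by auto
      have "(\<Sum>y\<in>{y\<in>S1. q y = y'}. h1 y * push h2 (mul' (iv' (q y)) x') * \<sigma>' (q y) x')
          = (\<Sum>y\<in>{y\<in>S1. q y = y'}. h1 y * push h2 (mul' (iv' y') x') * \<sigma>' y' x')"
        by (rule sum.cong) auto
      also have "\<dots> = push h1 y' * push h2 (mul' (iv' y') x') * \<sigma>' y' x'"
        using push_alt2[OF h1 y'] by (simp add: S1_def sum_distrib_right)
      finally show "(\<Sum>y\<in>{y\<in>S1. q y = y'}. h1 y * push h2 (mul' (iv' (q y)) x') * \<sigma>' (q y) x')
          = push h1 y' * push h2 (mul' (iv' y') x') * \<sigma>' y' x'" .
    qed
    also have "\<dots> = T.conv (push h1) (push h2) x'"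
      using S1 q_in push_spt[OF h1] x' S1_def by (intro T.conv_sum[symmetric]) auto
    finally show ?thesis .
  qed
qed

lemma push_delta: "push S.delta = T.delta"
proof
  fix x'
  show "push S.delta x' = T.delta x'"
  proof (cases "x' \<in> G'")
    case False then show ?thesis using T.e_in by (auto simp: push_out T.delta_def)
  next
    case True
    have "spt S.delta = {e}" by (auto simp: spt_def S.delta_def)
    then show ?thesis using push_alt[OF S.fs_delta' True] by (simp add: q_e T.delta_def S.delta_def)
  qed
qed

lemma push_fpow: "S.fs h \<Longrightarrow> push (S.fpow h m) = T.fpow (push h) m"
  by (induction m) (simp_all add: S.fpow_0 T.fpow_0 push_delta S.fpow_Suc T.fpow_Suc push_conv S.fpow_fs)

lemma push_selfadj:
  assumes h: "S.fs h" and sa: "S.selfadj h"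
  shows "T.selfadj (push h)"
  unfolding T.selfadj_def
proof
  fix y' assume y': "y' \<in> G'"
  have fin: "finite (spt h)" "spt h \<subseteq> G" using S.fsD[OF h] by auto
  have hiv: "h (iv x) = cnj (h x)" if "x \<in> G" for x using sa that by (simp add: S.selfadj_def)
  have "{x\<in>spt h. q x = iv' y'} = iv ` {x\<in>spt h. q x = y'}"
  proof
    show "{x\<in>spt h. q x = iv' y'} \<subseteq> iv ` {x\<in>spt h. q x = y'}"
    proof
      fix x assume x: "x \<in> {x\<in>spt h. q x = iv' y'}"
      then have xG: "x \<in> G" using fin by auto
      have "iv x \<in> {x\<in>spt h. q x = y'}"
        using x xG hiv y' by (auto simp: spt_def q_iv)
      moreover have "x = iv (iv x)" using xG by simp
      ultimately show "x \<in> iv ` {x\<in>spt h. q x = y'}" by blast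
    qed
    show "iv ` {x\<in>spt h. q x = y'} \<subseteq> {x\<in>spt h. q x = iv' y'}"
    proof
      fix x assume "x \<in> iv ` {x\<in>spt h. q x = y'}"
      then obtain u where u: "u \<in> spt h" "q u = y'" "x = iv u" by auto
      then have uG: "u \<in> G" using fin by auto
      show "x \<in> {x\<in>spt h. q x = iv' y'}" using u uG hiv by (auto simp: spt_def q_iv)
    qed
  qed
  moreover have "inj_on iv {x\<in>spt h. q x = y'}"
    by (rule inj_onI) (metis (no_types, lifting) S.iv_iv fin(2) mem_Collect_eq subsetD)
  ultimately have "(\<Sum>x\<in>{x\<in>spt h. q x = iv' y'}. h x) = (\<Sum>x\<in>{x\<in>spt h. q x = y'}. h (iv x))"
    by (simp add: sum.reindex)
  also have "\<dots> = (\<Sum>x\<in>{x\<in>spt h. q x = y'}. cnj (h x))"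
    using fin hiv by (intro sum.cong) auto
  finally show "push h (iv' y') = cnj (push h y')"
    using push_alt2[OF h y'] push_alt2[OF h T.iv_in[OF y']] by simp
qed

end

lemma dualD:
  assumes "\<kappa> \<in> dual_group"
  shows "continuous_on UNIV \<kappa>" "cmod (\<kappa> x) = 1" "\<kappa> (x + y) = \<kappa> x * \<kappa> y"
  using assms unfolding dual_group_def by auto

lemma dualI:
  assumes "continuous_on UNIV \<kappa>" "\<And>x. cmod (\<kappa> x) = 1" "\<And>x y. \<kappa> (x + y) = \<kappa> x * \<kappa> y"
  shows "\<kappa> \<in> dual_group"
  using assms unfolding dual_group_def by auto

lemma char_0:
  assumes k: "\<kappa> \<in> dual_group" shows "\<kappa> 0 = 1"
proof -
  have "\<kappa> (0 + 0) = \<kappa> 0 * \<kappa> 0" by (rule dualD(3)[OF k])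
  then have "\<kappa> 0 * 1 = \<kappa> 0 * \<kappa> 0" by simp
  moreover have "\<kappa> 0 \<noteq> 0" using dualD(2)[OF k, of 0] by auto
  ultimately show ?thesis by simp
qed

lemma one_dual: "(\<lambda>_. 1) \<in> dual_group"
  by (rule dualI) simp_all

lemma mul_dual:
  assumes k: "\<kappa> \<in> dual_group" and p: "\<psi> \<in> dual_group"
  shows "(\<lambda>x. \<kappa> x * \<psi> x) \<in> dual_group"
proof (rule dualI)
  show "continuous_on UNIV (\<lambda>x. \<kappa> x * \<psi> x)"
    by (rule continuous_on_mult[OF dualD(1)[OF k] dualD(1)[OF p]])
  fix x y :: 'a
  show "cmod (\<kappa> x * \<psi> x) = 1" using dualD(2)[OF k] dualD(2)[OF p] by (simp add: norm_mult)
  show "\<kappa> (x + y) * \<psi> (x + y) = \<kappa> x * \<psi> x * (\<kappa> y * \<psi> y)"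
    using dualD(3)[OF k] dualD(3)[OF p] by (simp add: ac_simps)
qed

lemma cnj_dual:
  assumes k: "\<kappa> \<in> dual_group"
  shows "(\<lambda>x. cnj (\<kappa> x)) \<in> dual_group"
proof (rule dualI)
  show "continuous_on UNIV (\<lambda>x. cnj (\<kappa> x))"
    by (rule continuous_on_cnj[OF dualD(1)[OF k]])
  fix x y :: 'a
  show "cmod (cnj (\<kappa> x)) = 1" using dualD(2)[OF k] by simp
  show "cnj (\<kappa> (x + y)) = cnj (\<kappa> x) * cnj (\<kappa> y)"
    using dualD(3)[OF k] by simp
qed

lemma chmul_q: "chmul H (qmap H \<kappa>) (qmap H \<psi>) = qmap H (\<lambda>x. \<kappa> x * \<psi> x)"
  by (auto simp: chmul_def qmap_def restrict_def)

lemma chmul_UNIV: "chmul UNIV \<kappa> \<psi> = (\<lambda>x. \<kappa> x * \<psi> x)"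
  by (simp add: chmul_def restrict_UNIV)

lemma chinv_q: "chinv H (qmap H \<kappa>) = qmap H (\<lambda>x. cnj (\<kappa> x))"
  by (auto simp: chinv_def qmap_def restrict_def)

lemma chinv_UNIV: "chinv UNIV \<kappa> = (\<lambda>x. cnj (\<kappa> x))"
  by (simp add: chinv_def restrict_UNIV)

lemma qmap_UNIV: "qmap UNIV \<kappa> = \<kappa>" by (simp add: qmap_def restrict_UNIV)

lemma qdual_UNIV: "qdual UNIV = dual_group" by (simp add: qdual_def qmap_UNIV)

lemma twg_qdual:
  assumes sk: "skew_bichar (qdual H) (chmul H) \<sigma>"
  shows "twg (qdual H) (chmul H) (chinv H) (qmap H (\<lambda>_. 1)) \<sigma>"
proof
  show "qmap H (\<lambda>_. 1) \<in> qdual H" unfolding qdual_def using one_dual by blast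
next
  fix x y assume "x \<in> qdual H" "y \<in> qdual H"
  then obtain \<kappa> \<psi> where "\<kappa> \<in> dual_group" "\<psi> \<in> dual_group" "x = qmap H \<kappa>" "y = qmap H \<psi>"
    unfolding qdual_def by blast
  then show "chmul H x y \<in> qdual H" unfolding qdual_def using chmul_q mul_dual by blast
next
  fix x assume "x \<in> qdual H"
  then obtain \<kappa> where "\<kappa> \<in> dual_group" "x = qmap H \<kappa>" unfolding qdual_def by blast
  then show "chinv H x \<in> qdual H" unfolding qdual_def using chinv_q cnj_dual by blast
next
  fix x y z :: "'a \<Rightarrow> complex"
  show "chmul H (chmul H x y) z = chmul H x (chmul H y z)"
    by (auto simp: chmul_def restrict_def)
next
  fix x y :: "'a \<Rightarrow> complex"
  show "chmul H x y = chmul H y x" by (auto simp: chmul_def restrict_def)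
next
  fix x assume "x \<in> qdual H"
  then obtain \<kappa> where "x = qmap H \<kappa>" unfolding qdual_def by blast
  then show "chmul H (qmap H (\<lambda>_. 1)) x = x" by (auto simp: chmul_def qmap_def restrict_def)
next
  fix x assume "x \<in> qdual H"
  then obtain \<kappa> where k: "\<kappa> \<in> dual_group" "x = qmap H \<kappa>" unfolding qdual_def by blast
  have "\<And>t. cnj (\<kappa> t) * \<kappa> t = 1"
    using k(1) unimod_cnj unfolding dual_group_def by (simp add: mult.commute)
  then show "chmul H (chinv H x) x = qmap H (\<lambda>_. 1)"
    using k by (auto simp: chmul_def chinv_def qmap_def restrict_def)
next
  show "skew_bichar (qdual H) (chmul H) \<sigma>" by (rule sk)
qed

lemma lift_skew:
  assumes sk: "skew_bichar (qdual H) (chmul H) \<sigma>"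
  shows "skew_bichar dual_group (chmul UNIV) (\<lambda>\<kappa> \<kappa>'. \<sigma> (qmap H \<kappa>) (qmap H \<kappa>'))"
proof -
  have qin: "\<kappa> \<in> dual_group \<Longrightarrow> qmap H \<kappa> \<in> qdual H" for \<kappa> unfolding qdual_def by blast
  have qm: "qmap H (chmul UNIV \<kappa> \<psi>) = chmul H (qmap H \<kappa>) (qmap H \<psi>)" for \<kappa> \<psi>
    by (simp add: chmul_q chmul_UNIV)
  show ?thesis using sk qin unfolding skew_bichar_def qm by simp
qed

lemma twhom_q:
  fixes H :: "'a::{ab_group_add,topological_space} set"
  assumes sk: "skew_bichar (qdual H) (chmul H) \<sigma>"
  shows "twhom dual_group (chmul UNIV) (chinv UNIV) (\<lambda>_. 1) (\<lambda>\<kappa> \<kappa>'. \<sigma> (qmap H \<kappa>) (qmap H \<kappa>'))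
           (qdual H) (chmul H) (chinv H) (qmap H (\<lambda>_. 1)) \<sigma> (qmap H)"
proof -
  have t1: "twg dual_group (chmul UNIV) (chinv UNIV) (\<lambda>_. 1) (\<lambda>\<kappa> \<kappa>'. \<sigma> (qmap H \<kappa>) (qmap H \<kappa>'))"
    using twg_qdual[OF lift_skew[OF sk, folded qdual_UNIV]] by (simp add: qdual_UNIV qmap_UNIV)
  have t2: "twg (qdual H) (chmul H) (chinv H) (qmap H (\<lambda>_. 1)) \<sigma>" by (rule twg_qdual[OF sk])
  show ?thesis
  proof (intro twhom.intro t1 t2 twhom_axioms.intro)
    fix x :: "'a \<Rightarrow> complex"
    assume "x \<in> dual_group" then show "qmap H x \<in> qdual H" unfolding qdual_def by blast
  next
    fix x y :: "'a \<Rightarrow> complex"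
    show "qmap H (chmul UNIV x y) = chmul H (qmap H x) (qmap H y)"
      by (simp add: chmul_q chmul_UNIV)
  next
    fix x :: "'a \<Rightarrow> complex"
    show "qmap H (chinv UNIV x) = chinv H (qmap H x)"
      by (simp add: chinv_q chinv_UNIV)
  qed simp_all
qed

lemma theta_push:
  assumes sk: "skew_bichar (qdual H) (chmul H) \<sigma>"
  shows "theta H f = twhom.push dual_group (qdual H) (qmap H) f"
  unfolding theta_def twhom.push_def[OF twhom_q[OF sk]] by simp

lemma sep_eventually:
  fixes l :: "'g::{topological_group_add, ab_group_add} \<Rightarrow> real"
    and H :: "nat \<Rightarrow> 'g set"
  assumes compact_G: "compact (UNIV :: 'g set)"
    and l_len: "length_fun l" and l_cont: "continuous_on UNIV l"
    and H_sub: "\<And>n. is_subgroup (H n)"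
    and H_conv: "(\<lambda>n. hausdorff_dl l (H n) UNIV) \<longlonglongrightarrow> 0"
    and k1: "\<kappa>1 \<in> dual_group" and k2: "\<kappa>2 \<in> dual_group" and ne: "\<kappa>1 \<noteq> \<kappa>2"
  shows "eventually (\<lambda>n. \<exists>h\<in>H n. \<kappa>1 h \<noteq> \<kappa>2 h) sequentially"
proof -
  obtain g where g: "\<kappa>1 g \<noteq> \<kappa>2 g" using ne by blast
  define Z where "Z = {x. \<kappa>1 x = \<kappa>2 x}"
  have "closed Z" unfolding Z_def by (rule closed_Collect_eq[OF dualD(1)[OF k1] dualD(1)[OF k2]])
  then have cZ: "compact Z" using compact_Int_closed[OF compact_G] by (metis inf_top_left)
  have Z0: "0 \<in> Z" using char_0[OF k1] char_0[OF k2] by (simp add: Z_def)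
  have cont: "continuous_on Z (\<lambda>x. l (- x + g))"
    by (rule continuous_on_compose2[OF l_cont]) (auto intro!: continuous_intros)
  obtain z where z: "z \<in> Z" "\<And>y. y \<in> Z \<Longrightarrow> l (- z + g) \<le> l (- y + g)"
    using continuous_attains_inf[OF cZ _ cont] Z0 by blast
  define \<delta> where "\<delta> = l (- z + g)"
  have lnn: "\<And>x. l x \<ge> 0" and l0: "\<And>x. l x = 0 \<longleftrightarrow> x = 0" using l_len by (auto simp: length_fun_def)
  have "z \<noteq> g" using z(1) g by (auto simp: Z_def)
  then have "- z + g \<noteq> 0" by (metis add.commute add_minus_cancel add_0 add.right_neutral)
  then have dpos: "\<delta> > 0" using lnn l0 unfolding \<delta>_def by (metis less_eq_real_def)
  have "compact (l ` UNIV)" by (rule compact_continuous_image[OF l_cont compact_G])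
  then have "bdd_above (l ` UNIV)" by (intro bounded_imp_bdd_above compact_imp_bounded)
  then obtain M where M: "\<And>x. l x \<le> M" by (auto simp: bdd_above_def)
  have ev: "eventually (\<lambda>n. hausdorff_dl l (H n) UNIV < \<delta>) sequentially"
    by (rule order_tendstoD(2)[OF H_conv dpos])
  show ?thesis
  proof (rule eventually_mono[OF ev])
    fix n assume hn: "hausdorff_dl l (H n) UNIV < \<delta>"
    have H0: "0 \<in> H n" using H_sub[of n] by (simp add: is_subgroup_def)
    have bb: "bdd_below ((\<lambda>a. l (- a + b)) ` H n)" for b
      using lnn by (intro bdd_belowI2) auto
    have infle: "(INF a\<in>H n. l (- a + b)) \<le> M" for b
    proof -
      have "(INF a\<in>H n. l (- a + b)) \<le> l (- 0 + b)" by (rule cINF_lower[OF bb H0])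
      then show ?thesis using M[of b] by simp
    qed
    have "bdd_above ((\<lambda>b. INF a\<in>H n. l (- a + b)) ` UNIV)"
      using infle by (intro bdd_aboveI2) auto
    then have "(INF a\<in>H n. l (- a + g)) \<le> (SUP b\<in>UNIV. INF a\<in>H n. l (- a + b))"
      by (rule cSUP_upper[OF UNIV_I])
    also have "\<dots> \<le> hausdorff_dl l (H n) UNIV" unfolding hausdorff_dl_def by simp
    finally have "(INF a\<in>H n. l (- a + g)) < \<delta>" using hn by simp
    then obtain a where a: "a \<in> H n" "l (- a + g) < \<delta>"
      using cINF_less_iff[OF _ bb] H0 by blast
    have "a \<notin> Z" using a(2) z(2) \<delta>_def by force
    then show "\<exists>h\<in>H n. \<kappa>1 h \<noteq> \<kappa>2 h" using a(1) by (auto simp: Z_def)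
  qed
qed

lemma eventually_inj:
  fixes l :: "'g::{topological_group_add, ab_group_add} \<Rightarrow> real"
    and H :: "nat \<Rightarrow> 'g set"
  assumes compact_G: "compact (UNIV :: 'g set)"
    and l_len: "length_fun l" and l_cont: "continuous_on UNIV l"
    and H_sub: "\<And>n. is_subgroup (H n)"
    and H_conv: "(\<lambda>n. hausdorff_dl l (H n) UNIV) \<longlonglongrightarrow> 0"
    and S: "finite S" "S \<subseteq> dual_group"
  shows "eventually (\<lambda>n. inj_on (qmap (H n)) S) sequentially"
proof -
  have "eventually (\<lambda>n. \<forall>\<kappa>1\<in>S. \<forall>\<kappa>2\<in>S. \<kappa>1 \<noteq> \<kappa>2 \<longrightarrow> (\<exists>h\<in>H n. \<kappa>1 h \<noteq> \<kappa>2 h)) sequentially"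
  proof (intro eventually_ball_finite S(1) ballI)
    fix \<kappa>1 \<kappa>2 assume k: "\<kappa>1 \<in> S" "\<kappa>2 \<in> S"
    show "eventually (\<lambda>n. \<kappa>1 \<noteq> \<kappa>2 \<longrightarrow> (\<exists>h\<in>H n. \<kappa>1 h \<noteq> \<kappa>2 h)) sequentially"
    proof (cases "\<kappa>1 = \<kappa>2")
      case True then show ?thesis by simp
    next
      case False
      have "eventually (\<lambda>n. \<exists>h\<in>H n. \<kappa>1 h \<noteq> \<kappa>2 h) sequentially"
        using k S(2) False by (intro sep_eventually[OF compact_G l_len l_cont H_sub H_conv]) auto
      then show ?thesis by (rule eventually_mono) simp
    qed
  qed
  then show ?thesis
  proof (rule eventually_mono)
    fix n assume h: "\<forall>\<kappa>1\<in>S. \<forall>\<kappa>2\<in>S. \<kappa>1 \<noteq> \<kappa>2 \<longrightarrow> (\<exists>h\<in>H n. \<kappa>1 h \<noteq> \<kappa>2 h)"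
    show "inj_on (qmap (H n)) S"
    proof (rule inj_onI)
      fix \<kappa>1 \<kappa>2 assume k: "\<kappa>1 \<in> S" "\<kappa>2 \<in> S" and eq: "qmap (H n) \<kappa>1 = qmap (H n) \<kappa>2"
      have "\<forall>t\<in>H n. \<kappa>1 t = \<kappa>2 t"
      proof
        fix t assume t: "t \<in> H n"
        have "qmap (H n) \<kappa>1 t = qmap (H n) \<kappa>2 t" using eq by simp
        then show "\<kappa>1 t = \<kappa>2 t" using t by (simp add: qmap_def)
      qed
      then show "\<kappa>1 = \<kappa>2" using h k by blast
    qed
  qed
qed

lemma twconv_tendsto:
  assumes fin: "finite {y\<in>G. f y \<noteq> 0}"
    and cl: "\<And>y x. y \<in> G \<Longrightarrow> x \<in> G \<Longrightarrow> mul (iv y) x \<in> G"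
    and sc: "\<And>a b. a \<in> G \<Longrightarrow> b \<in> G \<Longrightarrow> (\<lambda>n. \<sigma>n n a b) \<longlonglongrightarrow> \<sigma> a b"
    and gc: "\<And>a. a \<in> G \<Longrightarrow> (\<lambda>n. gn n a) \<longlonglongrightarrow> g a"
  shows "(\<lambda>n. twconv G mul iv (\<sigma>n n) f (gn n) x) \<longlonglongrightarrow> twconv G mul iv \<sigma> f g x"
proof (cases "x \<in> G")
  case False then show ?thesis by (simp add: twconv_def)
next
  case True
  have "(\<lambda>n. \<Sum>y\<in>{y\<in>G. f y \<noteq> 0}. f y * gn n (mul (iv y) x) * \<sigma>n n y (mul (iv y) x))
     \<longlonglongrightarrow> (\<Sum>y\<in>{y\<in>G. f y \<noteq> 0}. f y * g (mul (iv y) x) * \<sigma> y (mul (iv y) x))"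
  proof (rule tendsto_sum)
    fix y assume "y \<in> {y\<in>G. f y \<noteq> 0}"
    then have y: "y \<in> G" by simp
    show "(\<lambda>n. f y * gn n (mul (iv y) x) * \<sigma>n n y (mul (iv y) x))
        \<longlonglongrightarrow> f y * g (mul (iv y) x) * \<sigma> y (mul (iv y) x)"
      by (intro tendsto_mult tendsto_const gc sc cl y True)
  qed
  then show ?thesis using True by (simp add: twconv_def)
qed

lemma sum_supp_tendsto:
  assumes A: "finite A" and sp: "\<And>n. spt (hn n) \<subseteq> A" "spt h \<subseteq> A"
    and c: "\<And>x. x \<in> A \<Longrightarrow> (\<lambda>n. hn n x) \<longlonglongrightarrow> h x"
  shows "(\<lambda>n. l1 (hn n)) \<longlonglongrightarrow> l1 h" and "(\<lambda>n. l2norm (hn n)) \<longlonglongrightarrow> l2norm h"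
proof -
  have l1A: "l1 u = (\<Sum>x\<in>A. cmod (u x))" if "spt u \<subseteq> A" for u
    unfolding l1_def using that A by (intro sum.mono_neutral_left) (auto simp: spt_def)
  show "(\<lambda>n. l1 (hn n)) \<longlonglongrightarrow> l1 h"
    unfolding l1A[OF sp(1)] l1A[OF sp(2)] by (intro tendsto_sum tendsto_norm c)
  show "(\<lambda>n. l2norm (hn n)) \<longlonglongrightarrow> l2norm h"
    unfolding l2_sum[OF A sp(1)] l2_sum[OF A sp(2)]
    by (intro tendsto_real_sqrt tendsto_sum tendsto_power tendsto_norm c)
qed

lemma cpow:
  fixes m k :: nat assumes m: "m > 0"
  shows "(((real m + 1) powr (1/(2*m)))^k)^m = sqrt ((real m+1)^k)"
proof -
  have p: "real m + 1 > 0" by simp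
  have "(((real m + 1) powr (1/(2*m)))^k)^m = (real m + 1) powr (1/(2*m) * k * m)"
    using p by (simp add: powr_realpow[symmetric] powr_powr power_mult[symmetric] ac_simps)
  also have "1/(2*m) * k * m = k / 2" using m by (simp add: field_simps)
  also have "(real m + 1) powr (k/2) = sqrt ((real m+1)^k)"
    using p by (simp add: powr_half_sqrt[symmetric] powr_realpow[symmetric] powr_powr)
  finally show ?thesis .
qed

lemma clim: "(\<lambda>j::nat. ((real (2^j) + 1) powr (1 / real (2 * 2^j)))^k) \<longlonglongrightarrow> 1"
proof -
  have "(\<lambda>j::nat. ((2^j+1::real) powr (1/(2*2^j)))) \<longlonglongrightarrow> 1" by real_asymp
  then have "(\<lambda>j::nat. ((2^j+1::real) powr (1/(2*2^j)))^k) \<longlonglongrightarrow> 1^k" by (rule tendsto_power)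
  then show ?thesis by simp
qed

primrec Pset :: "('g \<Rightarrow> complex) set \<Rightarrow> nat \<Rightarrow> ('g \<Rightarrow> complex) set" where
  "Pset B 0 = {\<lambda>_. 1}"
| "Pset B (Suc m) = (\<lambda>p. chmul UNIV (fst p) (snd p)) ` (B \<times> Pset B m)"

lemma Pset_sub:
  assumes B: "finite B"
  shows "Pset B m \<subseteq> (\<lambda>e. \<lambda>x. \<Prod>b\<in>B. b x ^ e b) ` PiE B (\<lambda>_. {0..m})"
proof (induction m)
  case 0
  have i: "(\<lambda>b\<in>B. 0::nat) \<in> PiE B (\<lambda>_. {0..0::nat})"
    by (auto simp: PiE_def Pi_def extensional_def restrict_def)
  have ii: "(\<lambda>_. 1) = (\<lambda>x. \<Prod>b\<in>B. b x ^ (\<lambda>b\<in>B. 0::nat) b)"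
    by (simp add: restrict_def cong: prod.cong)
  have "(\<lambda>_. 1) \<in> (\<lambda>e. \<lambda>x. \<Prod>b\<in>B. b x ^ e b) ` PiE B (\<lambda>_. {0..0})"
    by (rule image_eqI[where x="\<lambda>b\<in>B. 0::nat", OF _ i]) (simp add: restrict_def cong: prod.cong)
  then show ?case by simp
next
  case (Suc m)
  show ?case
  proof
    fix w assume "w \<in> Pset B (Suc m)"
    then obtain y z where yz: "y \<in> B" "z \<in> Pset B m" "w = chmul UNIV y z" by auto
    from Suc.IH yz(2) obtain e where e: "e \<in> PiE B (\<lambda>_. {0..m})" "z = (\<lambda>x. \<Prod>b\<in>B. b x ^ e b)"
      by blast
    define e' where "e' = e(y := Suc (e y))"
    have e': "e' \<in> PiE B (\<lambda>_. {0..Suc m})"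
      using e(1) yz(1) unfolding e'_def PiE_def Pi_def extensional_def by auto
    have "w = (\<lambda>x. \<Prod>b\<in>B. b x ^ e' b)"
    proof
      fix x
      have "(\<Prod>b\<in>B. b x ^ e' b) = y x ^ e' y * (\<Prod>b\<in>B - {y}. b x ^ e' b)"
        using B yz(1) by (simp add: prod.remove)
      also have "(\<Prod>b\<in>B - {y}. b x ^ e' b) = (\<Prod>b\<in>B - {y}. b x ^ e b)"
        by (rule prod.cong) (auto simp: e'_def)
      also have "y x ^ e' y = y x * y x ^ e y" by (simp add: e'_def)
      also have "y x * y x ^ e y * (\<Prod>b\<in>B - {y}. b x ^ e b) = y x * (\<Prod>b\<in>B. b x ^ e b)"
        using B yz(1) by (simp add: prod.remove mult.assoc)
      finally show "w x = (\<Prod>b\<in>B. b x ^ e' b)" using yz(3) e(2) by (simp add: chmul_UNIV)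
    qed
    then show "w \<in> (\<lambda>e. \<lambda>x. \<Prod>b\<in>B. b x ^ e b) ` PiE B (\<lambda>_. {0..Suc m})" using e' by blast
  qed
qed

lemma Pset_card:
  assumes B: "finite B"
  shows "finite (Pset B m)" "card (Pset B m) \<le> (m + 1) ^ card B"
proof -
  have fin: "finite (PiE B (\<lambda>_. {0..m}))" using B by (simp add: finite_PiE)
  show "finite (Pset B m)" by (rule finite_subset[OF Pset_sub[OF B] finite_imageI[OF fin]])
  have "card (Pset B m) \<le> card ((\<lambda>e. \<lambda>x. \<Prod>b\<in>B. b x ^ e b) ` PiE B (\<lambda>_. {0..m}))"
    by (rule card_mono[OF finite_imageI[OF fin] Pset_sub[OF B]])
  also have "\<dots> \<le> card (PiE B (\<lambda>_. {0..m}))" by (rule card_image_le[OF fin])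
  also have "\<dots> = (m + 1) ^ card B" using B by (simp add: card_PiE)
  finally show "card (Pset B m) \<le> (m + 1) ^ card B" .
qed

theorem mainTheorem12:
  fixes l :: "'g::{topological_group_add, ab_group_add} \<Rightarrow> real"
    and H :: "nat \<Rightarrow> 'g set"
    and lam :: "nat \<Rightarrow> 'g measure" and lam_inf :: "'g measure"
    and \<sigma> :: "nat \<Rightarrow> ('g \<Rightarrow> complex) \<Rightarrow> ('g \<Rightarrow> complex) \<Rightarrow> complex"
    and \<sigma>_inf :: "('g \<Rightarrow> complex) \<Rightarrow> ('g \<Rightarrow> complex) \<Rightarrow> complex"
    and \<epsilon> :: real
    and c :: "('g \<Rightarrow> complex) \<Rightarrow> complex"
    and \<phi> :: "'g \<Rightarrow> complex"
    and B :: "('g \<Rightarrow> complex) set"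
    and N :: nat
    and a :: "('g \<Rightarrow> complex) \<Rightarrow> complex"
  assumes compact_G: "compact (UNIV :: 'g set)"
    and l_len: "length_fun l" and l_cont: "continuous_on UNIV l"
    and H_sub: "\<And>n. is_subgroup (H n)" and H_closed: "\<And>n. closed (H n)"
    and H_conv: "(\<lambda>n. hausdorff_dl l (H n) UNIV) \<longlonglongrightarrow> 0"
    and lam_haar: "\<And>n. haar_prob (H n) (lam n)"
    and lam_inf_haar: "haar_prob UNIV lam_inf"
    and \<sigma>_skew: "\<And>n. skew_bichar (qdual (H n)) (chmul (H n)) (\<sigma> n)"
    and \<sigma>_inf_skew: "skew_bichar (qdual UNIV) (chmul UNIV) \<sigma>_inf"
    and \<sigma>_conv: "\<And>\<kappa> \<kappa>'. \<kappa> \<in> dual_group \<Longrightarrow> \<kappa>' \<in> dual_group \<Longrightarrow>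
        (\<lambda>n. \<sigma> n (qmap (H n) \<kappa>) (qmap (H n) \<kappa>')) \<longlonglongrightarrow> \<sigma>_inf \<kappa> \<kappa>'"
    and \<epsilon>_pos: "\<epsilon> > 0"
    and B_def: "B = {\<kappa>. c \<kappa> \<noteq> 0}"
    and B_fin: "finite B" and B_dual: "B \<subseteq> dual_group"
    and \<phi>_def: "\<phi> = (\<lambda>g. \<Sum>\<kappa>\<in>B. c \<kappa> * \<kappa> g)"
    and \<phi>_nonneg: "\<And>g. \<phi> g \<in> \<real> \<and> Re (\<phi> g) \<ge> 0"
    and \<phi>_int: "(\<integral>g. Re (\<phi> g) \<partial>lam_inf) = 1"
    and \<phi>_l: "(\<integral>g. Re (\<phi> g) * l g \<partial>lam_inf) \<le> \<epsilon> / (3 * (1 + \<epsilon>))"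
    and N_prop: "\<And>n. n \<ge> N \<Longrightarrow> inj_on (qmap (H n)) B \<and> (\<integral>g. Re (\<phi> g) \<partial>lam n) \<ge> 1 / (1 + \<epsilon>)"
    and a_supp: "{\<kappa>. a \<kappa> \<noteq> 0} \<subseteq> B"
    and a_sa: "\<And>\<kappa>. \<kappa> \<in> dual_group \<Longrightarrow> a \<kappa> = twstar (chinv UNIV) \<sigma>_inf a \<kappa>"
  shows "(\<lambda>n. twisted_cstar_norm (qdual (H n)) (chmul (H n)) (chinv (H n)) (\<sigma> n) (theta (H n) a))
           \<longlonglongrightarrow> twisted_cstar_norm dual_group (chmul UNIV) (chinv UNIV) \<sigma>_inf a"
proof -
  let ?Gd = "dual_group :: ('g \<Rightarrow> complex) set"
  let ?mu = "chmul (UNIV :: 'g set)"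
  let ?iu = "chinv (UNIV :: 'g set)"
  let ?eu = "\<lambda>_::'g. 1::complex"
  define \<tau> where "\<tau> n = (\<lambda>\<kappa> \<kappa>'. \<sigma> n (qmap (H n) \<kappa>) (qmap (H n) \<kappa>'))" for n
  have hom: "twhom ?Gd ?mu ?iu ?eu (\<tau> n) (qdual (H n)) (chmul (H n)) (chinv (H n))
              (qmap (H n) ?eu) (\<sigma> n) (qmap (H n))" for n
    unfolding \<tau>_def by (rule twhom_q[OF \<sigma>_skew])
  have Sn: "twg ?Gd ?mu ?iu ?eu (\<tau> n)" for n using twhom.axioms(1)[OF hom] .
  have Tn: "twg (qdual (H n)) (chmul (H n)) (chinv (H n)) (qmap (H n) ?eu) (\<sigma> n)" for n
    using twhom.axioms(2)[OF hom] .
  have Ti: "twg ?Gd ?mu ?iu ?eu \<sigma>_inf"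
    using twg_qdual[OF \<sigma>_inf_skew] by (simp add: qdual_UNIV qmap_UNIV)
  have sptaB: "spt a \<subseteq> B" using a_supp by (simp add: spt_def)
  have a_fs: "fin_supp ?Gd a"
    using sptaB B_fin B_dual unfolding fin_supp_def spt_def by (auto intro: finite_subset)
  have a_sa': "twg.selfadj ?Gd ?iu a"
    unfolding twg.selfadj_def[OF Ti]
  proof
    fix y :: "'g \<Rightarrow> complex" assume y: "y \<in> ?Gd"
    have s1: "\<sigma>_inf y (?iu y) = 1"
      using twg.\<sigma>_iv_r[OF Ti y y] twg.\<sigma>_diag[OF Ti y] by simp
    have "a y = cnj (a (?iu y))" using a_sa[OF y] s1 by (simp add: twstar_def)
    then show "a (?iu y) = cnj (a y)" by simp
  qed
  have theta_eq: "theta (H n) f = twhom.push ?Gd (qdual (H n)) (qmap (H n)) f" for n f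
    by (rule theta_push[OF \<sigma>_skew])
  let ?P = "\<lambda>n. twhom.push ?Gd (qdual (H n)) (qmap (H n))"
  let ?N = "\<lambda>n. twisted_cstar_norm (qdual (H n)) (chmul (H n)) (chinv (H n)) (\<sigma> n) (theta (H n) a)"
  let ?Ninf = "twisted_cstar_norm ?Gd ?mu ?iu \<sigma>_inf a"
  have Pa_fs: "fin_supp (qdual (H n)) (?P n a)" for n by (rule twhom.push_fs[OF hom a_fs])
  have Pa_sa: "twg.selfadj (qdual (H n)) (chinv (H n)) (?P n a)" for n
    by (rule twhom.push_selfadj[OF hom a_fs a_sa'])
  have finB: "finite {y \<in> ?Gd. a y \<noteq> 0}"
    using B_fin a_supp by (auto intro: finite_subset)
  have cl: "\<And>y x. y \<in> ?Gd \<Longrightarrow> x \<in> ?Gd \<Longrightarrow> ?mu (?iu y) x \<in> ?Gd"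
    using twg.mul_in[OF Ti] twg.iv_in[OF Ti] by blast
  have sc: "\<And>u v. u \<in> ?Gd \<Longrightarrow> v \<in> ?Gd \<Longrightarrow> (\<lambda>n. \<tau> n u v) \<longlonglongrightarrow> \<sigma>_inf u v"
    unfolding \<tau>_def using \<sigma>_conv by blast
  have Ninf0: "0 \<le> ?Ninf" by (rule twg.nrm_nonneg[OF Ti a_fs])
  have lower: "eventually (\<lambda>n. c < ?N n) sequentially" if c: "c < ?Ninf" for c
  proof -
    have "\<exists>\<xi>\<in>{\<xi>. fin_supp ?Gd \<xi> \<and> l2norm \<xi> \<le> 1}. c < l2norm (twconv ?Gd ?mu ?iu \<sigma>_inf a \<xi>)"
      using c unfolding twisted_cstar_norm_def
      by (subst (asm) less_cSUP_iff[OF _ twg.nrm_bdd[OF Ti a_fs]]) (use twg.Xs_ne[OF Ti] in auto)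
    then obtain \<xi> where xi: "fin_supp ?Gd \<xi>" "l2norm \<xi> \<le> 1"
      and cxi: "c < l2norm (twconv ?Gd ?mu ?iu \<sigma>_inf a \<xi>)" by blast
    define A where "A = (\<lambda>p. ?mu (fst p) (snd p)) ` (spt a \<times> spt \<xi>)"
    have A: "finite A" "A \<subseteq> ?Gd"
      using twg.fsD[OF Ti a_fs] twg.fsD[OF Ti xi(1)] twg.pset_sub[OF Ti] A_def by auto
    have sptn: "spt (twconv ?Gd ?mu ?iu (\<tau> n) a \<xi>) \<subseteq> A" for n
      unfolding A_def by (rule twg.conv_spt[OF Sn a_fs])
    have spti: "spt (twconv ?Gd ?mu ?iu \<sigma>_inf a \<xi>) \<subseteq> A"
      unfolding A_def by (rule twg.conv_spt[OF Ti a_fs])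
    have cv: "(\<lambda>n. twconv ?Gd ?mu ?iu (\<tau> n) a \<xi> x) \<longlonglongrightarrow> twconv ?Gd ?mu ?iu \<sigma>_inf a \<xi> x" for x
      by (rule twconv_tendsto) (fact finB, (rule cl; assumption), (rule sc; assumption), rule tendsto_const)
    have l2c: "(\<lambda>n. l2norm (twconv ?Gd ?mu ?iu (\<tau> n) a \<xi>)) \<longlonglongrightarrow> l2norm (twconv ?Gd ?mu ?iu \<sigma>_inf a \<xi>)"
      by (rule sum_supp_tendsto(2)[OF A(1) sptn spti cv])
    have ev1: "eventually (\<lambda>n. c < l2norm (twconv ?Gd ?mu ?iu (\<tau> n) a \<xi>)) sequentially"
      by (rule order_tendstoD(1)[OF l2c cxi])
    have ev2: "eventually (\<lambda>n. inj_on (qmap (H n)) (spt \<xi> \<union> A)) sequentially"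
      using twg.fsD[OF Ti xi(1)] A
      by (intro eventually_inj[OF compact_G l_len l_cont H_sub H_conv]) auto
    show ?thesis
    proof (rule eventually_mono[OF eventually_conj[OF ev1 ev2]])
      fix n assume h: "c < l2norm (twconv ?Gd ?mu ?iu (\<tau> n) a \<xi>) \<and> inj_on (qmap (H n)) (spt \<xi> \<union> A)"
      have inj1: "inj_on (qmap (H n)) (spt \<xi>)" using h by (auto intro: inj_on_subset)
      have inj2: "inj_on (qmap (H n)) (spt (twconv ?Gd ?mu ?iu (\<tau> n) a \<xi>))"
        using h sptn[of n] by (auto intro: inj_on_subset)
      have Pxi: "fin_supp (qdual (H n)) (?P n \<xi>)" by (rule twhom.push_fs[OF hom xi(1)])
      have nPxi: "l2norm (?P n \<xi>) = l2norm \<xi>" by (rule twhom.push_inj_l2[OF hom xi(1) inj1])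
      have "l2norm (twconv (qdual (H n)) (chmul (H n)) (chinv (H n)) (\<sigma> n) (?P n a) (?P n \<xi>)) \<le> ?N n"
        unfolding theta_eq by (rule twg.nrm_ge[OF Tn Pa_fs Pxi]) (use nPxi xi(2) in simp)
      moreover have "twconv (qdual (H n)) (chmul (H n)) (chinv (H n)) (\<sigma> n) (?P n a) (?P n \<xi>)
          = ?P n (twconv ?Gd ?mu ?iu (\<tau> n) a \<xi>)"
        by (rule twhom.push_conv[OF hom a_fs xi(1), symmetric])
      moreover have "l2norm (?P n (twconv ?Gd ?mu ?iu (\<tau> n) a \<xi>)) = l2norm (twconv ?Gd ?mu ?iu (\<tau> n) a \<xi>)"
        by (rule twhom.push_inj_l2[OF hom twg.fs_conv[OF Sn a_fs xi(1)] inj2])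
      ultimately show "c < ?N n" using h by simp
    qed
  qed
  have fconv: "(\<lambda>n. twg.fpow ?Gd ?mu ?iu ?eu (\<tau> n) a m x) \<longlonglongrightarrow> twg.fpow ?Gd ?mu ?iu ?eu \<sigma>_inf a m x" for m x
  proof (induction m arbitrary: x)
    case 0 then show ?case by (simp add: twg.fpow_0[OF Sn] twg.fpow_0[OF Ti])
  next
    case (Suc m)
    show ?case unfolding twg.fpow_Suc[OF Sn] twg.fpow_Suc[OF Ti]
      by (rule twconv_tendsto) (fact finB, (rule cl; assumption), (rule sc; assumption), rule Suc.IH)
  qed
  have fspt: "spt (twg.fpow ?Gd ?mu ?iu ?eu s a m) \<subseteq> Pset B m" if s: "twg ?Gd ?mu ?iu ?eu s" for s m
  proof (induction m)
    case 0 then show ?case by (auto simp: twg.fpow_0[OF s] twg.delta_def[OF s] spt_def)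
  next
    case (Suc m)
    have "spt (twg.fpow ?Gd ?mu ?iu ?eu s a (Suc m))
        \<subseteq> (\<lambda>p. ?mu (fst p) (snd p)) ` (spt a \<times> spt (twg.fpow ?Gd ?mu ?iu ?eu s a m))"
      unfolding twg.fpow_Suc[OF s] by (rule twg.conv_spt[OF s a_fs])
    also have "\<dots> \<subseteq> Pset B (Suc m)" using sptaB Suc.IH by auto
    finally show ?case .
  qed
  have upper: "eventually (\<lambda>n. ?N n < c) sequentially" if c: "?Ninf < c" for c
  proof -
    define \<delta> where "\<delta> = c - ?Ninf"
    have dpos: "\<delta> > 0" using c \<delta>_def by simp
    define k where "k = card B"
    define cj where "cj j = ((real (2^j) + 1) powr (1 / real (2 * 2^j)))^k" for j :: nat
    have "(\<lambda>j. cj j * ?Ninf) \<longlonglongrightarrow> 1 * ?Ninf"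
      unfolding cj_def by (intro tendsto_mult clim tendsto_const)
    then have "eventually (\<lambda>j. cj j * ?Ninf < ?Ninf + \<delta>/2) sequentially"
      using dpos by (intro order_tendstoD(2)) auto
    then obtain N0 where N0: "\<And>j. j \<ge> N0 \<Longrightarrow> cj j * ?Ninf < ?Ninf + \<delta>/2"
      unfolding eventually_sequentially by blast
    define j where "j = N0"
    have j: "cj j * ?Ninf < ?Ninf + \<delta>/2" using N0[of j] j_def by simp
    define m :: nat where "m = 2^j"
    have m0: "m > 0" by (simp add: m_def)
    have cj0: "cj j \<ge> 0" by (simp add: cj_def)
    have cjm: "cj j ^ m = sqrt ((real m + 1)^k)"
      using cpow[OF m0, of k] by (simp add: cj_def m_def)
    define R where "R = cj j * ?Ninf + \<delta>/2"
    define X where "X = sqrt ((real m + 1)^k) * ?Ninf ^ m"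
    have X: "X = (cj j * ?Ninf) ^ m" by (simp add: X_def power_mult_distrib cjm)
    have XR: "X < R ^ m" unfolding X R_def
      by (rule power_strict_mono) (use dpos cj0 Ninf0 m0 in auto)
    define Ln where "Ln n = l1 (twg.fpow ?Gd ?mu ?iu ?eu (\<tau> n) a m)" for n
    define Li where "Li = l1 (twg.fpow ?Gd ?mu ?iu ?eu \<sigma>_inf a m)"
    have PB: "finite (Pset B m)" "card (Pset B m) \<le> (m + 1) ^ k"
      using Pset_card[OF B_fin] k_def by auto
    have Lc: "Ln \<longlonglongrightarrow> Li"
      unfolding Ln_def Li_def by (rule sum_supp_tendsto(1)[OF PB(1) fspt[OF Sn] fspt[OF Ti] fconv])
    have LiX: "Li \<le> X"
    proof -
      let ?h = "twg.fpow ?Gd ?mu ?iu ?eu \<sigma>_inf a m"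
      have "Li = (\<Sum>x\<in>Pset B m. cmod (?h x))"
        unfolding Li_def l1_def using fspt[OF Ti] PB(1)
        by (intro sum.mono_neutral_left) (auto simp: spt_def)
      also have "\<dots> = (\<Sum>x\<in>Pset B m. \<bar>1\<bar> * \<bar>cmod (?h x)\<bar>)" by simp
      also have "\<dots> \<le> L2_set (\<lambda>_. 1) (Pset B m) * L2_set (\<lambda>x. cmod (?h x)) (Pset B m)"
        by (rule L2_set_mult_ineq)
      also have "\<dots> = sqrt (card (Pset B m)) * l2norm ?h"
        using l2_L2[OF PB(1) fspt[OF Ti]] by (simp add: L2_set_constant)
      also have "\<dots> \<le> sqrt ((real m + 1)^k) * ?Ninf ^ m"
      proof (rule mult_mono)
        have "real (card (Pset B m)) \<le> real ((m + 1) ^ k)" using PB(2) by (simp only: of_nat_le_iff)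
        then show "sqrt (card (Pset B m)) \<le> sqrt ((real m + 1)^k)" by (simp add: add.commute)
        show "l2norm ?h \<le> ?Ninf ^ m" by (rule twg.fpow_l2[OF Ti a_fs])
      qed (auto simp: l2_nonneg)
      finally show ?thesis unfolding X_def .
    qed
    have ev: "eventually (\<lambda>n. Ln n < R ^ m) sequentially"
      by (rule order_tendstoD(2)[OF Lc]) (use LiX XR in simp)
    show ?thesis
    proof (rule eventually_mono[OF ev])
      fix n assume Lnn: "Ln n < R ^ m"
      have "?N n ^ m \<le> l1 (twg.fpow (qdual (H n)) (chmul (H n)) (chinv (H n)) (qmap (H n) ?eu) (\<sigma> n) (?P n a) m)"
        unfolding theta_eq m_def
      proof (rule twg.nrm_pow2[OF Tn Pa_fs Pa_sa])
        fix \<zeta> assume z: "fin_supp (qdual (H n)) \<zeta>" "l2norm \<zeta> \<le> 1"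
        have "l2norm ((twconv (qdual (H n)) (chmul (H n)) (chinv (H n)) (\<sigma> n) (?P n a) ^^ 2^j) \<zeta>)
            \<le> l1 (twg.fpow (qdual (H n)) (chmul (H n)) (chinv (H n)) (qmap (H n) ?eu) (\<sigma> n) (?P n a) (2^j)) * l2norm \<zeta>"
          by (rule twg.iter_l1[OF Tn Pa_fs z(1)])
        also have "\<dots> \<le> l1 (twg.fpow (qdual (H n)) (chmul (H n)) (chinv (H n)) (qmap (H n) ?eu) (\<sigma> n) (?P n a) (2^j)) * 1"
          by (rule mult_left_mono[OF z(2) twg.l1_nonneg[OF Tn]])
        finally show "l2norm ((twconv (qdual (H n)) (chmul (H n)) (chinv (H n)) (\<sigma> n) (?P n a) ^^ 2^j) \<zeta>)
            \<le> l1 (twg.fpow (qdual (H n)) (chmul (H n)) (chinv (H n)) (qmap (H n) ?eu) (\<sigma> n) (?P n a) (2^j))"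
          by simp
      qed
      also have "\<dots> = l1 (?P n (twg.fpow ?Gd ?mu ?iu ?eu (\<tau> n) a m))"
        by (simp add: twhom.push_fpow[OF hom a_fs])
      also have "\<dots> \<le> Ln n" unfolding Ln_def
        by (rule twhom.push_l1[OF hom twg.fpow_fs[OF Sn a_fs]])
      also have "\<dots> < R ^ m" by (rule Lnn)
      finally have "?N n ^ m < R ^ m" .
      then have "?N n < R" by (rule power_less_imp_less_base) (use dpos cj0 Ninf0 R_def in simp)
      then show "?N n < c" using j R_def \<delta>_def by linarith
    qed
  qed
  show ?thesis by (rule order_tendstoI[OF lower upper])
qed

end
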